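(* For all integers $n,m$ with $1\le m\le n$, there exist a circuit $\mathcal{C}\subset\mathbb{Z}^n$ with $m(\mathcal{C})=m$ and a generic real polynomial system supported on $\mathcal{C}$ having exactly $m+1$ positive solutions.
   Context: A circuit is a set $\mathcal{C}\subset\mathbb{Z}^n$ of $n+2$ points whose affine span is $\mathbb{R}^n$; it contains a unique minimal affinely dependent subset, and $m(\mathcal{C})$ denotes the dimension of the affine span of that subset. A real polynomial system supported on $\mathcal{C}$ is a system of $n$ Laurent polynomial equations $F_1=\dots=F_n=0$ in $x=(x_1,\dots,x_n)$ with real coefficients, where each $F_j$ has support $\mathcal{C}$ (the set of exponent vectors of its monomials with nonzero coefficient). Such a system is generic if its number of solutions in $(\mathbb{C}^* )^n$ equals the normalized volume $v(\mathcal{C})$ of the convex hull of $\mathcal{C}$ (normalized so that $[0,1]^n$ has volume $n!$). Positive solutions are solutions in $(\mathbb{R}_{>0})^n$. *)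

theory Defs
  imports "HOL-Analysis.Analysis"
begin

definition real_pt :: "int ^ 'n \<Rightarrow> real ^ 'n" where
  "real_pt a = (\<chi> i. real_of_int (a $ i))"

definition is_circuit :: "(int ^ 'n::finite) set \<Rightarrow> bool" where
  "is_circuit C \<longleftrightarrow> finite C \<and> card C = CARD('n) + 2 \<and>
     affine hull (real_pt ` C) = UNIV"

definition circuit_core :: "(int ^ 'n::finite) set \<Rightarrow> (real ^ 'n) set" where
  "circuit_core C = (THE D. D \<subseteq> real_pt ` C \<and> affine_dependent D \<and>
      (\<forall>E. E \<subset> D \<longrightarrow> \<not> affine_dependent E))"

definition circuit_m :: "(int ^ 'n::finite) set \<Rightarrow> int" where
  "circuit_m C = aff_dim (circuit_core C)"

definition normalized_volume :: "(int ^ 'n::finite) set \<Rightarrow> real" where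
  "normalized_volume C = fact CARD('n) * measure lebesgue (convex hull (real_pt ` C))"

definition laurent_eval :: "(int ^ 'n::finite \<Rightarrow> real) \<Rightarrow> 'a::{real_field} ^ 'n \<Rightarrow> 'a" where
  "laurent_eval c x = (\<Sum>a\<in>{a. c a \<noteq> 0}. of_real (c a) * (\<Prod>i\<in>UNIV. (x $ i) powi (a $ i)))"

definition supported_on :: "('n::finite \<Rightarrow> int ^ 'n \<Rightarrow> real) \<Rightarrow> (int ^ 'n) set \<Rightarrow> bool" where
  "supported_on F C \<longleftrightarrow> (\<forall>j. {a. F j a \<noteq> 0} = C)"

definition torus_solutions :: "('n::finite \<Rightarrow> int ^ 'n \<Rightarrow> real) \<Rightarrow> (complex ^ 'n) set" where
  "torus_solutions F = {x. (\<forall>i. x $ i \<noteq> 0) \<and> (\<forall>j. laurent_eval (F j) x = 0)}"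

definition positive_solutions :: "('n::finite \<Rightarrow> int ^ 'n \<Rightarrow> real) \<Rightarrow> (real ^ 'n) set" where
  "positive_solutions F = {x. (\<forall>i. x $ i > 0) \<and> (\<forall>j. laurent_eval (F j) x = 0)}"

definition generic_system :: "('n::finite \<Rightarrow> int ^ 'n \<Rightarrow> real) \<Rightarrow> (int ^ 'n) set \<Rightarrow> bool" where
  "generic_system F C \<longleftrightarrow> finite (torus_solutions F) \<and>
     real (card (torus_solutions F)) = normalized_volume C"

end

theory Submission
  imports Defs "HOL-Computational_Algebra.Polynomial"
begin

proposition
 fixes f :: "real^'n::finite \<Rightarrow> real^'n::_"
  assumes "linear f" "S \<in> lmeasurable"
  shows measurable_linear_image_fin: "(f ` S) \<in> lmeasurable"
    and measure_linear_image_fin: "measure lebesgue (f ` S) = \<bar>det (matrix f)\<bar> * measure lebesgue S" (is "?Q f S")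
proof -
  have "\<forall>S \<in> lmeasurable. (f ` S) \<in> lmeasurable \<and> ?Q f S"
  proof (rule induct_linear_elementary [OF \<open>linear f\<close>]; intro ballI)
    fix f g and S :: "(real,'n) vec set"
    assume "linear f" and "linear g"
      and f [rule_format]: "\<forall>S \<in> lmeasurable. f ` S \<in> lmeasurable \<and> ?Q f S"
      and g [rule_format]: "\<forall>S \<in> lmeasurable. g ` S \<in> lmeasurable \<and> ?Q g S"
      and S: "S \<in> lmeasurable"
    then have gS: "g ` S \<in> lmeasurable"
      by blast
    show "(f \<circ> g) ` S \<in> lmeasurable \<and> ?Q (f \<circ> g) S"
      using f [OF gS] g [OF S] matrix_compose [OF \<open>linear g\<close> \<open>linear f\<close>]
      by (simp add: o_def image_comp abs_mult det_mul)
  next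
    fix f :: "real^'n::_ \<Rightarrow> real^'n::_" and i and S :: "(real^'n::_) set"
    assume "linear f" and 0: "\<And>x. f x $ i = 0" and "S \<in> lmeasurable"
    then have "\<not> inj f"
      by (metis (full_types) linear_injective_imp_surjective one_neq_zero surjE vec_component)
    have detf: "det (matrix f) = 0"
      using \<open>\<not> inj f\<close> det_nz_iff_inj[OF \<open>linear f\<close>] by blast
    show "f ` S \<in> lmeasurable \<and> ?Q f S"
    proof
      show "f ` S \<in> lmeasurable"
        using lmeasurable_iff_indicator_has_integral \<open>linear f\<close> \<open>\<not> inj f\<close> negligible_UNIV negligible_linear_singular_image by blast
      have "measure lebesgue (f ` S) = 0"
        by (meson \<open>\<not> inj f\<close> \<open>linear f\<close> negligible_imp_measure0 negligible_linear_singular_image)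
      also have "\<dots> = \<bar>det (matrix f)\<bar> * measure lebesgue S"
        by (simp add: detf)
      finally show "?Q f S" .
    qed
  next
    fix c and S :: "(real^'n::_) set"
    assume "S \<in> lmeasurable"
    show "(\<lambda>a. \<chi> i. c i * a $ i) ` S \<in> lmeasurable \<and> ?Q (\<lambda>a. \<chi> i. c i * a $ i) S"
    proof
      show "(\<lambda>a. \<chi> i. c i * a $ i) ` S \<in> lmeasurable"
        by (simp add: \<open>S \<in> lmeasurable\<close> measurable_stretch)
      show "?Q (\<lambda>a. \<chi> i. c i * a $ i) S"
        by (simp add: measure_stretch [OF \<open>S \<in> lmeasurable\<close>, of c] axis_def matrix_def det_diagonal)
    qed
  next
    fix m :: "'n" and n :: "'n" and S :: "(real, 'n) vec set"
    assume "m \<noteq> n" and "S \<in> lmeasurable"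
    let ?h = "\<lambda>v::(real, 'n) vec. \<chi> i. v $ Transposition.transpose m n i"
    have lin: "linear ?h"
      by (rule linearI) (simp_all add: plus_vec_def scaleR_vec_def)
    have meq: "measure lebesgue ((\<lambda>v::(real, 'n) vec. \<chi> i. v $ Transposition.transpose m n i) ` cbox a b)
             = measure lebesgue (cbox a b)" for a b
    proof (cases "cbox a b = {}")
      case True then show ?thesis
        by simp
    next
      case False
      then have him: "?h ` (cbox a b) \<noteq> {}"
        by blast
      have eq: "?h ` (cbox a b) = cbox (?h a) (?h b)"
        by (auto simp: image_iff lambda_swap_Galois mem_box_cart) (metis transpose_involutory)+
      show ?thesis
        using him prod.permute [OF permutes_swap_id, where S=UNIV and g="\<lambda>i. (b - a)$i", symmetric]
        by (simp add: eq content_cbox_cart False)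
    qed
    have "(\<chi> i j. if Transposition.transpose m n i = j then 1 else 0) = (\<chi> i j. if j = Transposition.transpose m n i then 1 else (0::real))"
      by (auto intro!: Cart_lambda_cong)
    then have "matrix ?h = transpose(\<chi> i j. mat 1 $ i $ Transposition.transpose m n j)"
      by (auto simp: matrix_eq transpose_def axis_def mat_def matrix_def)
    then have 1: "\<bar>det (matrix ?h)\<bar> = 1"
      by (simp add: det_permute_columns permutes_swap_id sign_swap_id abs_mult)
    show "?h ` S \<in> lmeasurable \<and> ?Q ?h S"
      using measure_linear_sufficient [OF lin \<open>S \<in> lmeasurable\<close>] meq 1 by force
  next
    fix m n :: "'n" and S :: "(real, 'n) vec set"
    assume "m \<noteq> n" and "S \<in> lmeasurable"
    let ?h = "\<lambda>v::(real, 'n) vec. \<chi> i. if i = m then v $ m + v $ n else v $ i"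
    have lin: "linear ?h"
      by (rule linearI) (auto simp: algebra_simps plus_vec_def scaleR_vec_def vec_eq_iff)
    have mh: "matrix ?h = (\<chi> i j. if j = n then (axis m 1 + axis n 1 :: real^'n)$i else (mat 1 :: real^'n^'n)$i$j)"
      using \<open>m \<noteq> n\<close> by (auto simp: matrix_def axis_def mat_def vec_eq_iff)
    have "det (matrix ?h) = (axis m 1 + axis n 1 :: real^'n) $ n"
      unfolding mh using cramer_lemma[of n "mat 1" "axis m 1 + axis n 1 :: real^'n"]
      unfolding matrix_vector_mul_lid det_I by simp
    then have 1: "det(matrix ?h) = 1"
      using \<open>m \<noteq> n\<close> by (simp add: axis_def)
    have meq: "measure lebesgue (?h ` (cbox a b)) = measure lebesgue (cbox a b)" for a b
    proof (cases "cbox a b = {}")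
      case True then show ?thesis by simp
    next
      case False
      then have ne: "(+) (\<chi> i. if i = n then - a $ n else 0) ` cbox a b \<noteq> {}"
        by auto
      let ?v = "\<chi> i. if i = n then - a $ n else 0"
      have "?h ` cbox a b
            = (+) (\<chi> i. if i = m \<or> i = n then a $ n else 0) ` ?h ` (+) ?v ` (cbox a b)"
        using \<open>m \<noteq> n\<close> unfolding image_comp o_def by (force simp: vec_eq_iff)
      then have "measure lebesgue (?h ` (cbox a b))
               = measure lebesgue ((\<lambda>v. \<chi> i. if i = m then v $ m + v $ n else v $ i) `
                                   (+) ?v ` cbox a b)"
        by (rule ssubst) (rule measure_translation)
      also have "\<dots> = measure lebesgue ((\<lambda>v. \<chi> i. if i = m then v $ m + v $ n else v $ i) ` cbox (?v +a) (?v + b))"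
        by (metis (no_types, lifting) cbox_translation)
      also have "\<dots> = measure lebesgue ((+) ?v ` cbox a b)"
        apply (subst measure_shear_interval)
        using \<open>m \<noteq> n\<close> ne apply auto
        apply (simp add: cbox_translation)
        by (metis cbox_borel cbox_translation measure_completion sets_lborel)
      also have "\<dots> = measure lebesgue (cbox a b)"
        by (rule measure_translation)
        finally show ?thesis .
      qed
    show "?h ` S \<in> lmeasurable \<and> ?Q ?h S"
      using measure_linear_sufficient [OF lin \<open>S \<in> lmeasurable\<close>] meq 1 by force
  qed
  with assms show "(f ` S) \<in> lmeasurable" "?Q f S"
    by metis+
qed

lemma hull_decomp:
  fixes X :: "'a::real_vector set"
  assumes fin: "finite X" and s0: "sum lam X = 0" and v0: "(\<Sum>x\<in>X. lam x *\<^sub>R x) = 0"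
    and nz: "\<exists>x\<in>X. lam x \<noteq> 0"
  shows "convex hull X = (\<Union>p\<in>{x\<in>X. lam x > 0}. convex hull (X - {p}))"
proof
  show "(\<Union>p\<in>{x\<in>X. lam x > 0}. convex hull (X - {p})) \<subseteq> convex hull X"
    by (rule UN_least, rule hull_mono) auto
next
  let ?S = "{x\<in>X. lam x > 0}"
  have Sne: "?S \<noteq> {}"
  proof
    assume "?S = {}"
    then have le: "\<forall>x\<in>X. lam x \<le> 0" by force
    have "sum (\<lambda>x. - lam x) X = 0" using s0 by (simp add: sum_negf)
    moreover have "\<forall>x\<in>X. 0 \<le> - lam x" using le by simp
    ultimately have "\<forall>x\<in>X. - lam x = 0" using sum_nonneg_eq_0_iff[OF fin, of "\<lambda>x. - lam x"] by simp
    then have "\<forall>x\<in>X. lam x = 0" by simp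
    then show False using nz by blast
  qed
  have Sfin: "finite ?S" using fin by simp
  show "convex hull X \<subseteq> (\<Union>p\<in>?S. convex hull (X - {p}))"
  proof
    fix y assume "y \<in> convex hull X"
    then obtain u where u0: "\<forall>x\<in>X. 0 \<le> u x" and u1: "sum u X = 1" and uy: "(\<Sum>x\<in>X. u x *\<^sub>R x) = y"
      using convex_hull_finite[OF fin] by auto
    define t where "t = Min ((\<lambda>x. u x / lam x) ` ?S)"
    have "t \<in> (\<lambda>x. u x / lam x) ` ?S" unfolding t_def using Sne Sfin by (intro Min_in) auto
    then obtain p where pS: "p \<in> ?S" and tp: "t = u p / lam p" by auto
    have tle: "t \<le> u x / lam x" if "x \<in> ?S" for x unfolding t_def using that Sfin by (intro Min_le) auto
    have t0: "0 \<le> t" using tp pS u0 by auto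
    define v where "v x = u x - t * lam x" for x
    have v0': "\<forall>x\<in>X. 0 \<le> v x"
    proof
      fix x assume x: "x \<in> X"
      show "0 \<le> v x"
      proof (cases "lam x > 0")
        case True
        then have "t \<le> u x / lam x" using tle x by auto
        then have "t * lam x \<le> u x" using True by (simp add: pos_le_divide_eq)
        then show ?thesis by (simp add: v_def)
      next
        case False
        then have "t * lam x \<le> 0" using t0 by (simp add: mult_nonneg_nonpos)
        moreover have "0 \<le> u x" using u0 x by blast
        ultimately show ?thesis by (simp add: v_def)
      qed
    qed
    have vp: "v p = 0" using pS tp by (simp add: v_def)
    have v1: "sum v X = 1" by (simp add: v_def sum_subtractf u1 sum_distrib_left[symmetric] s0)
    have "(\<Sum>x\<in>X. v x *\<^sub>R x) = (\<Sum>x\<in>X. u x *\<^sub>R x - t *\<^sub>R (lam x *\<^sub>R x))"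
      by (simp add: v_def scaleR_diff_left)
    also have "\<dots> = y - t *\<^sub>R (\<Sum>x\<in>X. lam x *\<^sub>R x)"
      by (simp only: sum_subtractf scaleR_sum_right uy)
    finally have vy: "(\<Sum>x\<in>X. v x *\<^sub>R x) = y" using v0 by simp
    have pX: "p \<in> X" using pS by simp
    have "sum v (X - {p}) = 1" using v1 vp pX fin by (simp add: sum_diff1)
    moreover have "(\<Sum>x\<in>X - {p}. v x *\<^sub>R x) = y" using vy vp pX fin by (simp add: sum_diff1)
    moreover have "\<forall>x\<in>X - {p}. 0 \<le> v x" using v0' by blast
    ultimately have "\<exists>w. (\<forall>x\<in>X - {p}. 0 \<le> w x) \<and> sum w (X - {p}) = 1 \<and> (\<Sum>x\<in>X - {p}. w x *\<^sub>R x) = y"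
      by (intro exI[of _ v] conjI)
    then have "y \<in> convex hull (X - {p})"
      using fin by (simp only: convex_hull_finite[of "X - {p}"] finite_Diff mem_Collect_eq)
    then show "y \<in> (\<Union>p\<in>?S. convex hull (X - {p}))" using pS by blast
  qed
qed

lemma hull_overlap:
  fixes X :: "'a::real_vector set"
  assumes fin: "finite X"
    and dep1: "\<And>u. sum u X = 0 \<Longrightarrow> (\<Sum>x\<in>X. u x *\<^sub>R x) = 0 \<Longrightarrow> \<exists>s. \<forall>x\<in>X. u x = s * lam x"
    and p: "p \<in> X" "lam p > 0" and q: "q \<in> X" "lam q > 0" and pq: "p \<noteq> q"
  shows "convex hull (X - {p}) \<inter> convex hull (X - {q}) \<subseteq> convex hull (X - {p, q})"
proof
  fix y assume y: "y \<in> convex hull (X - {p}) \<inter> convex hull (X - {q})"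
  have finp: "finite (X - {p})" and finq: "finite (X - {q})" using fin by auto
  obtain u where u0: "\<forall>x\<in>X - {p}. 0 \<le> u x" and u1: "sum u (X - {p}) = 1"
    and uy: "(\<Sum>x\<in>X - {p}. u x *\<^sub>R x) = y"
    using y convex_hull_finite[OF finp] by auto
  obtain v where v0: "\<forall>x\<in>X - {q}. 0 \<le> v x" and v1: "sum v (X - {q}) = 1"
    and vy: "(\<Sum>x\<in>X - {q}. v x *\<^sub>R x) = y"
    using y convex_hull_finite[OF finq] by auto
  define u' where "u' x = (if x = p then 0 else u x)" for x
  define v' where "v' x = (if x = q then 0 else v x)" for x
  have su': "sum u' X = 1"
  proof -
    have "sum u' X = sum u' (X - {p}) + u' p" using fin p by (simp add: sum_diff1)
    also have "sum u' (X - {p}) = sum u (X - {p})" by (rule sum.cong) (auto simp: u'_def)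
    finally show ?thesis using u1 by (simp add: u'_def)
  qed
  have sv': "sum v' X = 1"
  proof -
    have "sum v' X = sum v' (X - {q}) + v' q" using fin q by (simp add: sum_diff1)
    also have "sum v' (X - {q}) = sum v (X - {q})" by (rule sum.cong) (auto simp: v'_def)
    finally show ?thesis using v1 by (simp add: v'_def)
  qed
  have yu': "(\<Sum>x\<in>X. u' x *\<^sub>R x) = y"
  proof -
    have "(\<Sum>x\<in>X. u' x *\<^sub>R x) = (\<Sum>x\<in>X - {p}. u' x *\<^sub>R x) + u' p *\<^sub>R p" using fin p by (simp add: sum_diff1)
    also have "(\<Sum>x\<in>X - {p}. u' x *\<^sub>R x) = (\<Sum>x\<in>X - {p}. u x *\<^sub>R x)" by (rule sum.cong) (auto simp: u'_def)
    finally show ?thesis using uy by (simp add: u'_def)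
  qed
  have yv': "(\<Sum>x\<in>X. v' x *\<^sub>R x) = y"
  proof -
    have "(\<Sum>x\<in>X. v' x *\<^sub>R x) = (\<Sum>x\<in>X - {q}. v' x *\<^sub>R x) + v' q *\<^sub>R q" using fin q by (simp add: sum_diff1)
    also have "(\<Sum>x\<in>X - {q}. v' x *\<^sub>R x) = (\<Sum>x\<in>X - {q}. v x *\<^sub>R x)" by (rule sum.cong) (auto simp: v'_def)
    finally show ?thesis using vy by (simp add: v'_def)
  qed
  have "sum (\<lambda>x. u' x - v' x) X = 0" using su' sv' by (simp add: sum_subtractf)
  moreover have "(\<Sum>x\<in>X. (u' x - v' x) *\<^sub>R x) = 0" using yu' yv' by (simp add: scaleR_diff_left sum_subtractf)
  ultimately obtain s where s: "\<forall>x\<in>X. u' x - v' x = s * lam x" using dep1 by blast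
  have "- v' p = s * lam p" using s[rule_format, OF p(1)] by (simp add: u'_def)
  moreover have "v' p \<ge> 0" using v0 p pq by (simp add: v'_def)
  ultimately have "s \<le> 0" using p by (smt (verit) mult_pos_pos)
  have "u' q = s * lam q" using s[rule_format, OF q(1)] pq by (simp add: v'_def)
  moreover have "u' q \<ge> 0" using u0 q pq by (simp add: u'_def)
  ultimately have "s \<ge> 0" using q by (smt (verit) mult_neg_pos)
  then have s0: "s = 0" using \<open>s \<le> 0\<close> by simp
  then have uq: "u' q = 0" using s[rule_format, OF q(1)] pq by (simp add: v'_def)
  have finpq: "finite (X - {p, q})" using fin by auto
  have z: "\<forall>x\<in>X - (X - {p, q}). u' x = 0" using uq by (auto simp: u'_def)
  have "sum u' (X - {p, q}) = 1"
    using su' sum.mono_neutral_right[OF fin _ z] by auto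
  moreover have "(\<Sum>x\<in>X - {p, q}. u' x *\<^sub>R x) = y"
    using yu' sum.mono_neutral_right[OF fin, of "X - {p,q}" "\<lambda>x. u' x *\<^sub>R x"] z by auto
  moreover have "\<forall>x\<in>X - {p, q}. 0 \<le> u' x" using u0 by (simp add: u'_def)
  ultimately have "\<exists>w. (\<forall>x\<in>X - {p, q}. 0 \<le> w x) \<and> sum w (X - {p, q}) = 1 \<and> (\<Sum>x\<in>X - {p, q}. w x *\<^sub>R x) = y"
    by (intro exI[of _ u'] conjI)
  then show "y \<in> convex hull (X - {p, q})"
    by (simp only: convex_hull_finite[OF finpq] mem_Collect_eq)
qed

lemma alt_sum: "(\<Sum>k<m. (-1::real)^k) = (if even m then 0 else 1)"
  by (induction m) auto

lemma sum_trunc: "(m::nat) \<le> N \<Longrightarrow> (\<Sum>k<N. if k < m then f k else 0) = (\<Sum>k<m. f k)"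
proof -
  assume "m \<le> N"
  then have "{..<N} \<inter> {k. k < m} = {..<m}" by auto
  then show ?thesis by (simp add: sum.If_cases)
qed

locale cfg =
  fixes idx :: "'n::finite \<Rightarrow> nat" and m :: nat
  assumes bij: "bij_betw idx UNIV {..<CARD('n)}" and m1: "1 \<le> m" and mN: "m \<le> CARD('n)"
begin

definition cc :: "'n \<Rightarrow> int" where "cc i = (if idx i < m then 2 * (-1)^(idx i) else 0)"
definition Pr :: "real^'n" where "Pr = (\<chi> i. real_of_int (cc i))"
definition Xs :: "(real^'n) set" where "Xs = insert 0 (insert Pr (range (\<lambda>i. axis i 1)))"
definition lam :: "real^'n \<Rightarrow> real" where
  "lam v = (if v = Pr then 1 else if v = 0 then (\<Sum>i\<in>UNIV. Pr$i) - 1 else - (v \<bullet> Pr))"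

lemma sum_idx: "(\<Sum>i\<in>UNIV. g (idx i)) = (\<Sum>k<CARD('n). g k)"
  using sum.reindex_bij_betw[OF bij, of g] by simp

lemma ex_i0: "\<exists>i0. idx i0 = 0"
proof -
  have "0 \<in> {..<CARD('n)}" using m1 mN by auto
  then show ?thesis using bij by (metis bij_betw_iff_bijections)
qed

definition i0 :: 'n where "i0 = (SOME i. idx i = 0)"
lemma idx_i0: "idx i0 = 0" unfolding i0_def using ex_i0 by (rule someI_ex)

lemma Pr_i0: "Pr $ i0 = 2" using idx_i0 m1 by (simp add: Pr_def cc_def)

lemma Pr_ne0: "Pr \<noteq> 0"
proof
  assume "Pr = 0"
  then have "Pr $ i0 = 0" by simp
  then show False using Pr_i0 by simp
qed

lemma Pr_ne_axis: "Pr \<noteq> axis i 1"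
proof
  assume "Pr = axis i 1"
  then have "Pr $ i0 = axis i 1 $ i0" by simp
  then show False using Pr_i0 by (simp add: axis_def split: if_splits)
qed

lemma axis_ne0: "axis i (1::real) \<noteq> 0"
  by simp

lemma finite_Xs: "finite Xs" by (simp add: Xs_def)

lemma sum_Xs: "sum g Xs = g 0 + g Pr + (\<Sum>i\<in>UNIV. g (axis i 1))"
proof -
  have inj: "inj (\<lambda>i::'n. axis i (1::real))" by (auto simp: inj_def axis_eq_axis)
  have "0 \<notin> insert Pr (range (\<lambda>i. axis i (1::real)))" using Pr_ne0 axis_ne0 by auto
  moreover have "Pr \<notin> range (\<lambda>i. axis i (1::real))" using Pr_ne_axis by auto
  ultimately show ?thesis
    unfolding Xs_def by (simp add: sum.reindex[OF inj] add.assoc)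
qed

lemma sum_cc: "(\<Sum>i\<in>UNIV. Pr $ i) = (if even m then 0 else 2)"
proof -
  have "(\<Sum>i\<in>UNIV. Pr $ i) = (\<Sum>k<CARD('n). (if k < m then 2 * (-1::real)^k else 0))"
    using sum_idx[of "\<lambda>k. (if k < m then 2 * (-1::real)^k else 0)"]
    by (simp add: Pr_def cc_def if_distrib cong: if_cong)
  also have "\<dots> = (\<Sum>k<m. 2 * (-1::real)^k)"
    using mN by (rule sum_trunc)
  also have "\<dots> = (if even m then 0 else 2)" by (simp add: sum_distrib_left[symmetric] alt_sum)
  finally show ?thesis .
qed

lemma sum_abs_cc: "(\<Sum>i\<in>UNIV. \<bar>Pr $ i\<bar>) = 2 * m"
proof -
  have "(\<Sum>i\<in>UNIV. \<bar>Pr $ i\<bar>) = (\<Sum>k<CARD('n). (if k < m then 2 else 0::real))"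
    using sum_idx[of "\<lambda>k. (if k < m then 2 else 0::real)"]
    by (simp add: Pr_def cc_def if_distrib abs_mult power_abs cong: if_cong)
  also have "\<dots> = (\<Sum>k<m. 2::real)"
    using mN by (rule sum_trunc)
  finally show ?thesis by simp
qed

end

lemma Basis_cart_eq: "(Basis :: (real^'n) set) = range (\<lambda>i. axis i 1)"
  by (auto simp: Basis_vec_def)

lemma std_simplex_meas:
  "measure lebesgue (convex hull (insert 0 (range (\<lambda>i. axis i 1))) :: (real^'n::finite) set) = 1 / fact CARD('n)"
proof -
  have c: "compact (convex hull (insert 0 (Basis :: (real^'n) set)))"
    by (intro finite_imp_compact_convex_hull) auto
  have "measure lebesgue (convex hull (insert 0 (Basis :: (real^'n) set))) = measure lborel (convex hull (insert 0 (Basis :: (real^'n) set)))"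
    using c by (intro measure_completion) (auto dest: compact_imp_closed)
  also have "\<dots> = 1 / fact CARD('n)" by (simp add: content_std_simplex)
  finally show ?thesis by (simp add: Basis_cart_eq)
qed

lemma std_simplex_lmeas:
  "convex hull (insert 0 (range (\<lambda>i. axis i 1))) \<in> (lmeasurable :: (real^'n::finite) set set)"
  by (intro lmeasurable_compact finite_imp_compact_convex_hull) auto

lemma neg_hull:
  fixes T :: "(real^'n::finite) set"
  assumes "finite T" "card T \<le> CARD('n)"
  shows "negligible (convex hull T)"
proof (cases "T = {}")
  case True then show ?thesis by simp
next
  case False
  then obtain a where a: "a \<in> T" by auto
  define B where "B = (\<lambda>x. -a + x) ` (T - {a})"
  have finB: "finite B" using assms by (simp add: B_def)
  have "card B \<le> card (T - {a})" unfolding B_def using assms by (intro card_image_le) simp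
  also have "\<dots> < CARD('n)"
  proof -
    have "card T > 0" using assms a card_gt_0_iff by blast
    then show ?thesis using assms a by (simp add: card_Diff_singleton)
  qed
  finally have cB: "card B < CARD('n)" .
  have "dim (span B) \<le> card B" using finB by (intro dim_le_card) auto
  then have "dim (span B) < DIM(real^'n)" using cB by simp
  then have "negligible (span B)" by (rule negligible_lowdim)
  then have "negligible ((\<lambda>x. a + x) ` span B)" by (rule negligible_translation)
  moreover have "convex hull T \<subseteq> (\<lambda>x. a + x) ` span B"
    using convex_hull_subset_affine_hull[of T] affine_hull_span2[OF a] by (simp add: B_def)
  ultimately show ?thesis by (rule negligible_subset)
qed

context cfg begin

lemma lam_Pr: "lam Pr = 1" by (simp add: lam_def)
lemma lam_0: "lam 0 = (if even m then -1 else 1)" using Pr_ne0 sum_cc by (simp add: lam_def)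
lemma lam_axis: "lam (axis i 1) = - Pr $ i"
  using Pr_ne_axis[of i] axis_ne0[of i] by (simp add: lam_def inner_axis')

lemma lam_sum: "sum lam Xs = 0"
  by (simp add: sum_Xs lam_Pr lam_axis lam_def[of 0] Pr_ne0 sum_negf)

lemma vec_sum_axis: "(\<Sum>i\<in>UNIV. c i *\<^sub>R axis i (1::real)) $ j = (c j :: real)"
proof -
  have "(\<Sum>i\<in>UNIV. c i *\<^sub>R axis i (1::real)) $ j = (\<Sum>i\<in>UNIV. (c i *\<^sub>R axis i (1::real)) $ j)"
    by (rule sum_component)
  also have "\<dots> = (\<Sum>i\<in>UNIV. if i = j then c i else 0)"
    by (rule sum.cong) (auto simp: axis_def)
  finally show ?thesis by simp
qed

lemma lam_vsum: "(\<Sum>x\<in>Xs. lam x *\<^sub>R x) = 0"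
proof -
  have "(\<Sum>x\<in>Xs. lam x *\<^sub>R x) = Pr + (\<Sum>i\<in>UNIV. (- Pr $ i) *\<^sub>R axis i 1)"
    by (simp add: sum_Xs lam_Pr lam_axis)
  also have "\<dots> = 0"
    unfolding vec_eq_iff vector_add_component vec_sum_axis by simp
  finally show ?thesis .
qed

lemma dep1:
  assumes s: "sum u Xs = 0" and v: "(\<Sum>x\<in>Xs. u x *\<^sub>R x) = 0"
  shows "\<exists>s. \<forall>x\<in>Xs. u x = s * lam x"
proof (intro exI[of _ "u Pr"] ballI)
  have v': "u Pr *\<^sub>R Pr + (\<Sum>i\<in>UNIV. u (axis i 1) *\<^sub>R axis i 1) = 0"
    using v by (simp add: sum_Xs)
  have ax: "u (axis j 1) = u Pr * lam (axis j 1)" for j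
  proof -
    have "(u Pr *\<^sub>R Pr + (\<Sum>i\<in>UNIV. u (axis i 1) *\<^sub>R axis i 1)) $ j = 0" using v' by simp
    then have "u Pr * Pr $ j + u (axis j 1) = 0"
      unfolding vector_add_component vec_sum_axis by simp
    then show ?thesis by (simp add: lam_axis)
  qed
  have "u 0 + u Pr + (\<Sum>i\<in>UNIV. u (axis i 1)) = 0" using s by (simp add: sum_Xs)
  then have "u 0 = - u Pr + u Pr * (\<Sum>i\<in>UNIV. Pr $ i)"
    by (simp add: ax lam_axis sum_negf sum_distrib_left)
  then have z: "u 0 = u Pr * lam 0" using Pr_ne0 by (simp add: lam_def algebra_simps)
  fix x assume "x \<in> Xs"
  then show "u x = u Pr * lam x"
    unfolding Xs_def using z ax lam_Pr by auto
qed

definition sg :: real where "sg = (if even m then 1 else -1)"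
definition Sp where "Sp = {x\<in>Xs. sg * lam x > 0}"

lemma Sp_not0: "0 \<notin> Sp" by (simp add: Sp_def sg_def lam_0)

lemma Sp_sum: "(\<Sum>x\<in>Sp. \<bar>lam x\<bar>) = real m + 1"
proof -
  have fin: "finite Xs" by (rule finite_Xs)
  have sub: "Sp \<subseteq> Xs" by (auto simp: Sp_def)
  have sgabs: "\<bar>sg\<bar> = 1" by (simp add: sg_def)
  have al: "\<bar>lam x\<bar> = \<bar>sg * lam x\<bar>" for x by (simp add: abs_mult sg_def)
  have a: "(\<Sum>x\<in>Sp. \<bar>lam x\<bar>) = (\<Sum>x\<in>Sp. sg * lam x)"
  proof (rule sum.cong)
    fix x assume "x \<in> Sp"
    then have "sg * lam x > 0" by (simp add: Sp_def)
    then show "\<bar>lam x\<bar> = sg * lam x" by (metis al abs_of_pos)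
  qed simp
  have b0: "(\<Sum>x\<in>Xs - Sp. \<bar>lam x\<bar>) = (\<Sum>x\<in>Xs - Sp. - (sg * lam x))"
  proof (rule sum.cong)
    fix x assume "x \<in> Xs - Sp"
    then have "sg * lam x \<le> 0" by (auto simp: Sp_def)
    then show "\<bar>lam x\<bar> = - (sg * lam x)" by (metis al abs_of_nonpos)
  qed simp
  have b: "(\<Sum>x\<in>Xs - Sp. \<bar>lam x\<bar>) = - (\<Sum>x\<in>Xs - Sp. sg * lam x)"
    unfolding b0 by (rule sum_negf)
  have "(\<Sum>x\<in>Xs. sg * lam x) = 0" by (simp add: sum_distrib_left[symmetric] lam_sum)
  then have c: "(\<Sum>x\<in>Sp. sg * lam x) + (\<Sum>x\<in>Xs - Sp. sg * lam x) = 0"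
    using sum.subset_diff[OF sub fin, of "\<lambda>x. sg * lam x"] by simp
  have "(\<Sum>x\<in>Xs. \<bar>lam x\<bar>) = 2 * real m + 2"
    using sum_abs_cc by (simp add: sum_Xs lam_Pr lam_axis lam_0)
  moreover have "(\<Sum>x\<in>Xs. \<bar>lam x\<bar>) = (\<Sum>x\<in>Sp. \<bar>lam x\<bar>) + (\<Sum>x\<in>Xs - Sp. \<bar>lam x\<bar>)"
    using sum.subset_diff[OF sub fin, of "\<lambda>x. \<bar>lam x\<bar>"] by simp
  ultimately show ?thesis using a b c by linarith
qed

end

context cfg begin

lemma card_Xs: "card Xs = CARD('n) + 2"
proof -
  have inj: "inj (\<lambda>i::'n. axis i (1::real))" by (auto simp: inj_def axis_eq_axis)
  have "0 \<notin> insert Pr (range (\<lambda>i. axis i (1::real)))" using Pr_ne0 axis_ne0 by auto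
  moreover have "Pr \<notin> range (\<lambda>i. axis i (1::real))" using Pr_ne_axis by auto
  ultimately show ?thesis
    unfolding Xs_def by (simp add: card_image[OF inj])
qed

lemma meas_Pr: "measure lebesgue (convex hull (Xs - {Pr})) = 1 / fact CARD('n)"
proof -
  have ne: "axis i 1 \<noteq> Pr" for i using Pr_ne_axis[of i] by metis
  have "Xs - {Pr} = insert 0 (range (\<lambda>i. axis i 1))"
    using Pr_ne0 ne by (auto simp: Xs_def)
  then show ?thesis by (simp add: std_simplex_meas)
qed

lemma meas_axis: "measure lebesgue (convex hull (Xs - {axis k 1})) = \<bar>Pr $ k\<bar> / fact CARD('n)"
proof -
  define T where "T x = x + (x $ k) *\<^sub>R (Pr - axis k 1)" for x :: "real^'n"
  have lin: "linear T"
    by (rule linearI) (simp_all add: T_def algebra_simps)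
  have Tax: "T (axis j 1) = (if j = k then Pr else axis j 1)" for j
    by (auto simp: T_def axis_def)
  have "T ` insert 0 (range (\<lambda>i. axis i 1)) = Xs - {axis k 1}"
  proof -
    have "T 0 = 0" by (simp add: T_def)
    moreover have "T ` range (\<lambda>i. axis i 1) = insert Pr (range (\<lambda>i. axis i 1) - {axis k 1})"
    proof
      show "T ` range (\<lambda>i. axis i 1) \<subseteq> insert Pr (range (\<lambda>i. axis i 1) - {axis k 1})"
      proof
        fix x assume "x \<in> T ` range (\<lambda>i. axis i 1)"
        then obtain j where x: "x = T (axis j 1)" by auto
        show "x \<in> insert Pr (range (\<lambda>i. axis i 1) - {axis k 1})"
        proof (cases "j = k")
          case True then show ?thesis using x Tax by simp
        next
          case False
          then have "axis j (1::real) \<noteq> axis k 1" by (simp add: axis_eq_axis)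
          then show ?thesis using x Tax False by simp
        qed
      qed
    next
      show "insert Pr (range (\<lambda>i. axis i 1) - {axis k 1}) \<subseteq> T ` range (\<lambda>i. axis i 1)"
      proof
        fix x assume x: "x \<in> insert Pr (range (\<lambda>i. axis i 1) - {axis k 1})"
        show "x \<in> T ` range (\<lambda>i. axis i 1)"
        proof (cases "x = Pr")
          case True
          then have "x = T (axis k 1)" using Tax by simp
          then show ?thesis by blast
        next
          case False
          then obtain j where j: "x = axis j 1" "j \<noteq> k" using x by auto
          then have "x = T (axis j 1)" using Tax by simp
          then show ?thesis by blast
        qed
      qed
    qed
    ultimately show ?thesis
      using Pr_ne_axis[of k] axis_ne0[of k] Pr_ne0 by (auto simp: Xs_def)
  qed
  then have eq: "convex hull (Xs - {axis k 1}) = T ` (convex hull (insert 0 (range (\<lambda>i. axis i 1))))"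
    using convex_hull_linear_image[OF lin, of "insert 0 (range (\<lambda>i. axis i 1))"] by simp
  have mT: "matrix T = (\<chi> i j. if j = k then Pr $ i else (mat 1 :: real^'n^'n) $ i $ j)"
    unfolding matrix_def Tax by (simp add: vec_eq_iff mat_def axis_def)
  have dT: "det (matrix T) = Pr $ k"
    unfolding mT using cramer_lemma[of k "mat 1" Pr] unfolding matrix_vector_mul_lid det_I by simp
  show ?thesis
    unfolding eq measure_linear_image_fin[OF lin std_simplex_lmeas] dT std_simplex_meas by simp
qed

lemma Sp_sub: "Sp \<subseteq> Xs" by (auto simp: Sp_def)

lemma meas_Sp: "p \<in> Sp \<Longrightarrow> measure lebesgue (convex hull (Xs - {p})) = \<bar>lam p\<bar> / fact CARD('n)"
proof -
  assume p: "p \<in> Sp"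
  then have "p \<in> Xs" "p \<noteq> 0" using Sp_sub Sp_not0 by auto
  then have "p = Pr \<or> (\<exists>k. p = axis k 1)" by (auto simp: Xs_def)
  then show ?thesis
    using meas_Pr meas_axis lam_Pr lam_axis by auto
qed

lemma vol_Xs: "measure lebesgue (convex hull Xs) = (real m + 1) / fact CARD('n)"
proof -
  have fin: "finite Xs" by (rule finite_Xs)
  have s2: "sum (\<lambda>x. sg * lam x) Xs = 0" by (simp add: sum_distrib_left[symmetric] lam_sum)
  have v2: "(\<Sum>x\<in>Xs. (sg * lam x) *\<^sub>R x) = 0"
  proof -
    have "(\<Sum>x\<in>Xs. (sg * lam x) *\<^sub>R x) = sg *\<^sub>R (\<Sum>x\<in>Xs. lam x *\<^sub>R x)"
      by (simp add: scaleR_sum_right)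
    then show ?thesis using lam_vsum by simp
  qed
  have nz: "\<exists>x\<in>Xs. sg * lam x \<noteq> 0" using lam_Pr by (auto simp: Xs_def sg_def intro!: bexI[of _ Pr])
  have dec: "convex hull Xs = (\<Union>p\<in>Sp. convex hull (Xs - {p}))"
    unfolding Sp_def by (rule hull_decomp[OF fin s2 v2 nz])
  have sgsq: "sg * sg = 1" by (simp add: sg_def)
  have dep2: "\<exists>s. \<forall>x\<in>Xs. u x = s * (sg * lam x)" if a1: "sum u Xs = 0" and a2: "(\<Sum>x\<in>Xs. u x *\<^sub>R x) = 0" for u
  proof -
    obtain s where "\<forall>x\<in>Xs. u x = s * lam x" using dep1[OF a1 a2] by blast
    moreover have "(s * sg) * (sg * lam x) = s * lam x" for x by (simp add: sg_def)
    ultimately have "\<forall>x\<in>Xs. u x = (s * sg) * (sg * lam x)" by simp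
    then show ?thesis by blast
  qed
  have pw: "pairwise (\<lambda>p q. negligible (convex hull (Xs - {p}) \<inter> convex hull (Xs - {q}))) Sp"
  proof (rule pairwiseI)
    fix p q assume p: "p \<in> Sp" and q: "q \<in> Sp" and pq: "p \<noteq> q"
    have sub: "convex hull (Xs - {p}) \<inter> convex hull (Xs - {q}) \<subseteq> convex hull (Xs - {p, q})"
      using p q pq Sp_sub by (intro hull_overlap[OF fin dep2]) (auto simp: Sp_def)
    have pq2: "{p, q} \<subseteq> Xs" using p q Sp_sub by auto
    have "card (Xs - {p, q}) = card Xs - card {p, q}" using fin pq2 by (intro card_Diff_subset) auto
    then have "card (Xs - {p, q}) = CARD('n)" using pq card_Xs by simp
    then have "negligible (convex hull (Xs - {p, q}))" using fin by (intro neg_hull) auto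
    then show "negligible (convex hull (Xs - {p}) \<inter> convex hull (Xs - {q}))"
      using sub by (rule negligible_subset)
  qed
  have lm: "convex hull (Xs - {p}) \<in> lmeasurable" for p
    using fin by (intro lmeasurable_compact finite_imp_compact_convex_hull) auto
  have "measure lebesgue (convex hull Xs) = (\<Sum>p\<in>Sp. measure lebesgue (convex hull (Xs - {p})))"
    unfolding dec using fin Sp_sub by (intro measure_negligible_finite_Union_image pw lm) (auto intro: finite_subset)
  also have "\<dots> = (\<Sum>p\<in>Sp. \<bar>lam p\<bar> / fact CARD('n))"
    by (rule sum.cong) (auto simp: meas_Sp)
  also have "\<dots> = (real m + 1) / fact CARD('n)"
    by (simp add: sum_divide_distrib[symmetric] Sp_sum)
  finally show ?thesis .
qed

end

lemma core_unique:
  fixes Xs :: "'a::real_vector set"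
  assumes fin: "finite Xs"
    and dep1: "\<And>u. sum u Xs = 0 \<Longrightarrow> (\<Sum>x\<in>Xs. u x *\<^sub>R x) = 0 \<Longrightarrow> \<exists>s. \<forall>x\<in>Xs. u x = s * lam x"
    and ls: "sum lam Xs = 0" and lv: "(\<Sum>x\<in>Xs. lam x *\<^sub>R x) = 0"
    and nz: "\<exists>x\<in>Xs. lam x \<noteq> 0"
  shows "(THE D. D \<subseteq> Xs \<and> affine_dependent D \<and> (\<forall>E. E \<subset> D \<longrightarrow> \<not> affine_dependent E))
         = {x\<in>Xs. lam x \<noteq> 0}"
proof -
  let ?K = "{x\<in>Xs. lam x \<noteq> 0}"
  have key: "?K \<subseteq> D" if D: "D \<subseteq> Xs" and dd: "affine_dependent D" for D
  proof -
    have finD: "finite D" using fin D by (rule finite_subset[rotated])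
    have "\<exists>U. sum U D = 0 \<and> (\<exists>v\<in>D. U v \<noteq> 0) \<and> (\<Sum>v\<in>D. U v *\<^sub>R v) = 0"
      using dd by (simp only: affine_dependent_explicit_finite[OF finD])
    then obtain U where UU: "sum U D = 0 \<and> (\<exists>v\<in>D. U v \<noteq> 0) \<and> (\<Sum>v\<in>D. U v *\<^sub>R v) = 0" ..
    have U1: "sum U D = 0" using UU by (rule conjunct1)
    have U2: "\<exists>v\<in>D. U v \<noteq> 0" using UU by simp
    have U3: "(\<Sum>v\<in>D. U v *\<^sub>R v) = 0" using UU by simp
    define U' where "U' x = (if x \<in> D then U x else 0)" for x
    have DX: "Xs \<inter> D = D" using D by auto
    have sU': "sum U' Xs = 0" unfolding U'_def using sum.inter_restrict[OF fin, of U D] DX U1 by simp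
    have vU': "(\<Sum>x\<in>Xs. U' x *\<^sub>R x) = 0"
    proof -
      have "(\<Sum>x\<in>Xs. U' x *\<^sub>R x) = (\<Sum>x\<in>Xs. if x \<in> D then U x *\<^sub>R x else 0)"
        by (rule sum.cong) (auto simp: U'_def)
      also have "\<dots> = (\<Sum>x\<in>Xs \<inter> D. U x *\<^sub>R x)" using sum.inter_restrict[OF fin, of "\<lambda>x. U x *\<^sub>R x" D] by simp
      finally show ?thesis using DX U3 by simp
    qed
    obtain s where s: "\<forall>x\<in>Xs. U' x = s * lam x" using dep1[OF sU' vU'] by blast
    obtain v where v: "v \<in> D" "U v \<noteq> 0" using U2 by blast
    have "s \<noteq> 0"
    proof
      assume s0: "s = 0"
      have "v \<in> Xs" using v D by blast
      then have "U' v = s * lam v" using s by blast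
      then have "U' v = 0" using s0 by simp
      then show False using v by (simp add: U'_def)
    qed
    show ?thesis
    proof
      fix x assume x: "x \<in> ?K"
      then have "U' x = s * lam x" using s by blast
      then have "U' x \<noteq> 0" using x \<open>s \<noteq> 0\<close> by simp
      then show "x \<in> D" by (auto simp: U'_def split: if_splits)
    qed
  qed
  have finK: "finite ?K" using fin by simp
  have Kdep: "affine_dependent ?K"
  proof -
    have sub: "?K \<subseteq> Xs" by auto
    have z: "\<forall>x\<in>Xs - ?K. lam x = 0" by auto
    have e1: "sum lam ?K = sum lam Xs" by (rule sum.mono_neutral_right[OF fin sub z, symmetric])
    have "sum lam ?K = 0" using trans[OF e1 ls] .
    moreover have z2: "\<forall>x\<in>Xs - ?K. lam x *\<^sub>R x = 0" using z by simp
    have e2: "(\<Sum>v\<in>?K. lam v *\<^sub>R v) = (\<Sum>v\<in>Xs. lam v *\<^sub>R v)"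
      by (rule sum.mono_neutral_right[OF fin sub z2, symmetric])
    moreover have "(\<Sum>v\<in>?K. lam v *\<^sub>R v) = 0" using trans[OF e2 lv] .
    moreover have "\<exists>v\<in>?K. lam v \<noteq> 0" using nz by auto
    ultimately show ?thesis unfolding affine_dependent_explicit_finite[OF finK] by (intro exI[of _ lam] conjI)
  qed
  show ?thesis
  proof (rule the_equality)
    show "?K \<subseteq> Xs \<and> affine_dependent ?K \<and> (\<forall>E. E \<subset> ?K \<longrightarrow> \<not> affine_dependent E)"
    proof (intro conjI allI impI)
      show "?K \<subseteq> Xs" by auto
      show "affine_dependent ?K" by (rule Kdep)
      fix E assume E: "E \<subset> ?K"
      show "\<not> affine_dependent E"
      proof
        assume "affine_dependent E"
        moreover have "E \<subseteq> Xs" using E by auto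
        ultimately have KE: "?K \<subseteq> E" by (intro key)
        have "E \<subseteq> ?K" using E by (rule psubset_imp_subset)
        then have "E = ?K" using KE by (rule subset_antisym)
        then show False using E by simp
      qed
    qed
  next
    fix D assume D: "D \<subseteq> Xs \<and> affine_dependent D \<and> (\<forall>E. E \<subset> D \<longrightarrow> \<not> affine_dependent E)"
    then have "?K \<subseteq> D" using key by blast
    moreover have "\<not> ?K \<subset> D" using D Kdep by blast
    ultimately show "D = ?K" by (simp add: psubset_eq)
  qed
qed

context cfg begin

definition Pz :: "int^'n" where "Pz = (\<chi> i. cc i)"
definition CCz :: "(int^'n) set" where "CCz = insert 0 (insert Pz (range (\<lambda>i. axis i 1)))"

lemma rp_axis: "real_pt (axis i 1) = axis i 1"
  by (simp add: real_pt_def vec_eq_iff axis_def)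
lemma rp_0: "real_pt 0 = 0" by (simp add: real_pt_def vec_eq_iff)
lemma rp_Pz: "real_pt Pz = Pr" by (simp add: real_pt_def Pr_def Pz_def)

lemma rp_CCz: "real_pt ` CCz = Xs"
  by (simp add: CCz_def Xs_def image_image rp_axis rp_0 rp_Pz)

lemma inj_rp: "inj real_pt"
  by (auto simp: inj_def real_pt_def vec_eq_iff)

lemma is_circuit_CCz: "is_circuit CCz"
proof -
  have "finite CCz" by (simp add: CCz_def)
  moreover have "card CCz = CARD('n) + 2"
  proof -
    have "card (real_pt ` CCz) = card CCz" using inj_rp by (intro card_image) (auto simp: inj_on_def inj_def)
    then show ?thesis using rp_CCz card_Xs by simp
  qed
  moreover have "affine hull Xs = UNIV"
  proof -
    have "0 \<in> affine hull Xs" by (intro hull_inc) (simp add: Xs_def)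
    then have "affine hull Xs = span Xs" by (rule affine_hull_span_0)
    moreover have "(Basis :: (real^'n) set) \<subseteq> Xs" by (auto simp: Basis_cart_eq Xs_def)
    then have "span Basis \<subseteq> span Xs" by (rule span_mono)
    ultimately show ?thesis by auto
  qed
  ultimately show ?thesis unfolding is_circuit_def rp_CCz by simp
qed

lemma nvol_CCz: "normalized_volume CCz = real m + 1"
  unfolding normalized_volume_def rp_CCz vol_Xs by simp

definition Kc where "Kc = insert 0 (insert Pr ((\<lambda>i. axis i 1) ` {i. idx i < m}))"

lemma Kc_eq: "{x\<in>Xs. lam x \<noteq> 0} = Kc"
proof -
  have "lam (axis i 1) \<noteq> 0 \<longleftrightarrow> idx i < m" for i
    by (simp add: lam_axis Pr_def cc_def)
  moreover have "lam 0 \<noteq> 0" by (simp add: lam_0)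
  ultimately show ?thesis using lam_Pr by (auto simp: Xs_def Kc_def)
qed

lemma core_CCz: "circuit_core CCz = Kc"
  unfolding circuit_core_def rp_CCz Kc_eq[symmetric]
  using lam_Pr by (intro core_unique finite_Xs dep1 lam_sum lam_vsum) (auto simp: Xs_def)

lemma card_I: "card {i. idx i < m} = m"
proof -
  have "bij_betw idx {i. idx i < m} {..<m}"
    using bij mN unfolding bij_betw_def inj_on_def by (auto simp: image_iff)
  then show ?thesis by (simp add: bij_betw_same_card)
qed

lemma m_CCz: "circuit_m CCz = int m"
proof -
  define K0 where "K0 = insert 0 ((\<lambda>i. axis i (1::real)) ` {i. idx i < m})"
  have Kc: "Kc = insert Pr K0" by (auto simp: Kc_def K0_def)
  have "Pr \<in> span ((\<lambda>i. axis i (1::real)) ` {i. idx i < m})"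
  proof -
    have "Pr = (\<Sum>i\<in>{i. idx i < m}. Pr $ i *\<^sub>R axis i 1)"
    proof (rule vec_eq_iff[THEN iffD2], rule allI)
      fix j
      have "(\<Sum>i\<in>{i. idx i < m}. Pr $ i *\<^sub>R axis i (1::real)) $ j = (\<Sum>i\<in>{i. idx i < m}. (Pr $ i *\<^sub>R axis i (1::real)) $ j)"
        by (rule sum_component)
      also have "\<dots> = (\<Sum>i\<in>{i. idx i < m}. if i = j then Pr $ i else 0)"
        by (rule sum.cong) (auto simp: axis_def)
      also have "\<dots> = (if idx j < m then Pr $ j else 0)" by simp
      also have "\<dots> = Pr $ j" by (simp add: Pr_def cc_def)
      finally show "Pr $ j = (\<Sum>i\<in>{i. idx i < m}. Pr $ i *\<^sub>R axis i 1) $ j" by simp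
    qed
    also have "\<dots> \<in> span ((\<lambda>i. axis i (1::real)) ` {i. idx i < m})"
      by (intro span_sum span_scale span_base) auto
    finally show ?thesis .
  qed
  moreover have "span ((\<lambda>i. axis i (1::real)) ` {i. idx i < m}) \<subseteq> span K0"
    by (intro span_mono) (auto simp: K0_def)
  moreover have "affine hull K0 = span K0"
    by (intro affine_hull_span_0 hull_inc) (simp add: K0_def)
  ultimately have PrK0: "Pr \<in> affine hull K0" by auto
  have ind: "\<not> affine_dependent K0"
  proof -
    have "0 \<notin> (\<lambda>i. axis i (1::real)) ` {i. idx i < m}" using axis_ne0 by auto
    moreover have "independent ((\<lambda>i. axis i (1::real)) ` {i. idx i < m})"
      by (rule independent_mono[OF independent_Basis]) (auto simp: Basis_cart_eq)
    ultimately show ?thesis unfolding K0_def by (simp add: affine_dependent_iff_dependent)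
  qed
  have inj: "inj (\<lambda>i::'n. axis i (1::real))" by (auto simp: inj_def axis_eq_axis)
  have cK0: "card K0 = m + 1"
  proof -
    have "0 \<notin> (\<lambda>i. axis i (1::real)) ` {i. idx i < m}" using axis_ne0 by auto
    then show ?thesis unfolding K0_def
      using card_image[OF inj_on_subset[OF inj], of "{i. idx i < m}"] card_I by simp
  qed
  have "aff_dim Kc = aff_dim K0" unfolding Kc using PrK0 by (simp add: aff_dim_insert)
  also have "\<dots> = int m" using aff_dim_affine_independent[OF ind] cK0 by simp
  finally show ?thesis unfolding circuit_m_def core_CCz .
qed

end

definition Kz :: "nat \<Rightarrow> int" where "Kz m = (if even m then - (2 * int m + 1) else 2 * int m + 1)"
definition Ez :: "nat \<Rightarrow> nat \<Rightarrow> int" where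
  "Ez j m = 2 * int j + Kz m + 4 * (\<Sum>k<m. (-1)^(k+1) * int (max (k+1) j))"

lemma alt_sum_int: "(\<Sum>k<m. - ((-1::int)^k)) = (if even m then 0 else -1)"
  by (induction m) auto

lemma Ez_big: "m \<le> j \<Longrightarrow> Ez j m = 2 * int j + Kz m - (if even m then 0 else 4 * int j)"
proof -
  assume "m \<le> j"
  then have "(\<Sum>k<m. (-1::int)^(k+1) * int (max (k+1) j)) = (\<Sum>k<m. (-1::int)^(k+1) * int j)"
    by (intro sum.cong) auto
  also have "\<dots> = int j * (\<Sum>k<m. (-1::int)^(k+1))" by (simp add: sum_distrib_left mult.commute)
  finally show ?thesis by (simp add: Ez_def alt_sum_int)
qed

lemma Ez_val: "j \<le> m + 1 \<Longrightarrow> Ez j m = (-1)^(j+1)"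
proof (induction m arbitrary: j)
  case 0
  then have "j = 0 \<or> j = 1" by auto
  then show ?case by (auto simp: Ez_def Kz_def)
next
  case (Suc m)
  show ?case
  proof (cases "j \<le> m + 1")
    case True
    have e: "Ez j (Suc m) = Ez j m + (Kz (Suc m) - Kz m + 4 * (-1)^(m+1) * int (max (m+1) j))"
      by (simp add: Ez_def algebra_simps)
    have z: "Kz (Suc m) - Kz m + 4 * (-1)^(m+1) * int (max (m+1) j) = 0"
      using True by (auto simp: Kz_def)
    show ?thesis using e z Suc.IH[OF True] by simp
  next
    case False
    then have j: "j = m + 2" using Suc.prems by auto
    then show ?thesis by (subst Ez_big) (auto simp: Kz_def)
  qed
qed

definition MM :: "nat \<Rightarrow> real" where "MM m = 4 ^ (m + 1)"
definition ww :: "nat \<Rightarrow> nat \<Rightarrow> real" where "ww m k = MM m ^ (2 * (k + 1))"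
definition s0 :: "nat \<Rightarrow> real" where "s0 m = exp (- real_of_int (Kz m) * ln (MM m) / 2)"
definition sc :: "nat \<Rightarrow> nat \<Rightarrow> real" where "sc m k = (if k = 0 then s0 m else 1)"
definition lfg :: "nat \<Rightarrow> nat \<Rightarrow> 'a::real_field \<Rightarrow> 'a" where
  "lfg m k y = of_real (sc m k) * (of_real (ww m k) + y)"
definition pvg :: "nat \<Rightarrow> 'a::real_field \<Rightarrow> 'a" where
  "pvg m y = y * (\<Prod>k\<in>{k. k < m \<and> odd k}. (lfg m k y)^2) - (\<Prod>k\<in>{k. k < m \<and> even k}. (lfg m k y)^2)"

lemma MM_gt1: "MM m > 1"
proof -
  have "(1::real) \<le> 4 ^ m" by simp
  then have "1 < 4 * (4::real) ^ m" by linarith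
  then show ?thesis by (simp add: MM_def)
qed
lemma MM_pos: "MM m > 0" by (simp add: MM_def)
lemma ww_pos: "ww m k > 0" by (simp add: ww_def MM_pos)
lemma s0_pos: "s0 m > 0" by (simp add: s0_def)
lemma sc_pos: "sc m k > 0" by (simp add: sc_def s0_pos)

lemma lfg_real_pos: "y > 0 \<Longrightarrow> lfg m k (y::real) > 0"
  by (simp add: lfg_def sc_pos ww_pos add_pos_pos)

lemma split_sum:
  fixes m :: nat and g :: "nat \<Rightarrow> real"
  shows "(\<Sum>k<m. if odd k then g k else - g k) = sum g {k. k < m \<and> odd k} - sum g {k. k < m \<and> even k}"
proof -
  have "(\<Sum>k<m. if odd k then g k else - g k) = sum g ({..<m} \<inter> {k. odd k}) + sum (\<lambda>k. - g k) ({..<m} \<inter> - {k. odd k})"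
    by (rule sum.If_cases) simp
  moreover have "{..<m} \<inter> {k. odd k} = {k. k < m \<and> odd k}" by auto
  moreover have "{..<m} \<inter> - {k. odd k} = {k. k < m \<and> even k}" by auto
  ultimately show ?thesis by (simp add: sum_negf)
qed

lemma ln_MM: "ln (MM m) = 2 * (real m + 1) * ln 2"
proof -
  have "ln (MM m) = ln ((4::real) ^ (m + 1))" by (simp only: MM_def)
  also have "\<dots> = real (m + 1) * ln 4" by (rule ln_realpow)
  finally have "ln (MM m) = real (m + 1) * ln 4" .
  moreover have "ln (4::real) = 2 * ln 2"
    using ln_realpow[of 2 2] by simp
  ultimately show ?thesis by simp
qed

lemma ln_sum_bound:
  fixes a b :: nat
  shows "2 * real (max a b) * ln (MM m) \<le> ln (MM m ^ (2*a) + MM m ^ (2*b)) \<and>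
         ln (MM m ^ (2*a) + MM m ^ (2*b)) \<le> 2 * real (max a b) * ln (MM m) + ln 2"
proof -
  let ?M = "MM m"
  have M1: "?M \<ge> 1" using MM_gt1 by (simp add: less_imp_le)
  have lo: "?M ^ (2 * max a b) \<le> ?M ^ (2*a) + ?M ^ (2*b)"
    by (cases "a \<le> b") (auto simp: max_def add_increasing add_increasing2)
  have "?M ^ (2*a) \<le> ?M ^ (2 * max a b)" by (intro power_increasing M1) auto
  moreover have "?M ^ (2*b) \<le> ?M ^ (2 * max a b)" by (intro power_increasing M1) auto
  ultimately have hi: "?M ^ (2*a) + ?M ^ (2*b) \<le> 2 * ?M ^ (2 * max a b)" by simp
  have pos: "?M ^ (2 * max a b) > 0" using MM_pos by simp
  have lnp: "ln (?M ^ (2 * max a b)) = 2 * real (max a b) * ln ?M" by (simp add: ln_realpow)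
  have "ln (?M ^ (2 * max a b)) \<le> ln (?M ^ (2*a) + ?M ^ (2*b))"
    using lo pos by (subst ln_le_cancel_iff) auto
  moreover have "ln (?M ^ (2*a) + ?M ^ (2*b)) \<le> ln (2 * ?M ^ (2 * max a b))"
    using hi pos MM_pos by (subst ln_le_cancel_iff) (auto intro: add_pos_pos)
  moreover have "ln (2 * ?M ^ (2 * max a b)) = ln 2 + ln (?M ^ (2 * max a b))"
  proof -
    have *: "\<And>X::real. X > 0 \<Longrightarrow> ln (2 * X) = ln 2 + ln X" by (simp add: ln_mult)
    show ?thesis by (rule *[OF pos])
  qed
  ultimately show ?thesis using lnp by linarith
qed


lemma lfg_real: "lfg m k (y::real) = sc m k * (ww m k + y)" by (simp add: lfg_def)

lemma pv_sign:
  assumes m1: "1 \<le> m" and jm: "j \<le> m + 1"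
  shows "if odd j then pvg m (MM m ^ (2*j)) > (0::real) else pvg m (MM m ^ (2*j)) < (0::real)"
proof -
  define y where "y = MM m ^ (2*j)"
  define L where "L = ln (MM m)"
  have ypos: "y > 0" using MM_pos by (simp add: y_def)
  have lpos: "lfg m k y > 0" for k using ypos by (rule lfg_real_pos)
  have lne: "lfg m k y \<noteq> 0" for k using lpos[of k] by simp
  define T1 where "T1 = y * (\<Prod>k\<in>{k. k < m \<and> odd k}. (lfg m k y)^2)"
  define T2 where "T2 = (\<Prod>k\<in>{k. k < m \<and> even k}. (lfg m k y)^2)"
  have pv: "pvg m y = T1 - T2" by (simp add: pvg_def T1_def T2_def)
  have T1pos: "T1 > 0" unfolding T1_def using ypos by (intro mult_pos_pos prod_pos) (auto simp: lne)
  have T2pos: "T2 > 0" unfolding T2_def by (intro prod_pos) (auto simp: lne)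
  define h where "h k = ln (ww m k + y)" for k
  have lnl: "ln ((lfg m k y)^2) = 2 * ln (sc m k) + 2 * h k" for k
  proof -
    have "ln ((lfg m k y)^2) = 2 * ln (lfg m k y)" by (simp add: ln_realpow)
    also have "ln (lfg m k y) = ln (sc m k) + ln (ww m k + y)"
      unfolding lfg_real using sc_pos ww_pos ypos by (intro ln_mult_pos) (auto intro: add_pos_pos)
    finally show ?thesis by (simp add: h_def)
  qed
  have lnsc: "ln (sc m k) = (if k = 0 then ln (s0 m) else 0)" for k by (simp add: sc_def)
  have finO: "finite {k. k < m \<and> odd k}" and finE: "finite {k. k < m \<and> even k}" by auto
  have lnT1: "ln T1 = ln y + (\<Sum>k\<in>{k. k < m \<and> odd k}. 2 * ln (sc m k) + 2 * h k)"
  proof -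
    have "ln T1 = ln y + ln (\<Prod>k\<in>{k. k < m \<and> odd k}. (lfg m k y)^2)"
      unfolding T1_def using ypos lpos by (intro ln_mult_pos prod_pos) (auto simp: lne)
    also have "ln (\<Prod>k\<in>{k. k < m \<and> odd k}. (lfg m k y)^2) = (\<Sum>k\<in>{k. k < m \<and> odd k}. ln ((lfg m k y)^2))"
      using lpos by (intro ln_prod finO) (simp add: less_imp_neq[symmetric])
    finally show ?thesis by (simp add: lnl)
  qed
  have lnT2: "ln T2 = (\<Sum>k\<in>{k. k < m \<and> even k}. 2 * ln (sc m k) + 2 * h k)"
  proof -
    have "ln T2 = (\<Sum>k\<in>{k. k < m \<and> even k}. ln ((lfg m k y)^2))"
      unfolding T2_def using lpos by (intro ln_prod finE) (simp add: less_imp_neq[symmetric])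
    then show ?thesis by (simp add: lnl)
  qed
  have sO: "(\<Sum>k\<in>{k. k < m \<and> odd k}. ln (sc m k)) = 0"
    by (rule sum.neutral) (auto simp: sc_def)
  have sE: "(\<Sum>k\<in>{k. k < m \<and> even k}. ln (sc m k)) = ln (s0 m)"
  proof -
    have "(\<Sum>k\<in>{k. k < m \<and> even k}. ln (sc m k)) = (\<Sum>k\<in>{k. k < m \<and> even k}. if k = 0 then ln (s0 m) else 0)"
      by (rule sum.cong) (auto simp: sc_def)
    also have "\<dots> = ln (s0 m)" using m1 finE by (simp add: sum.delta)
    finally show ?thesis .
  qed
  have lns0: "ln (s0 m) = - real_of_int (Kz m) * L / 2" by (simp add: s0_def L_def)
  have lny: "ln y = 2 * real j * L" by (simp add: y_def L_def ln_realpow)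
  have D: "ln T1 - ln T2 = 2 * real j * L + real_of_int (Kz m) * L
           + 2 * (\<Sum>k<m. if odd k then h k else - h k)"
    unfolding lnT1 lnT2 split_sum sum.distrib sum_distrib_left[symmetric] sO sE lny lns0
    by (simp add: algebra_simps)
  define e where "e k = h k - 2 * real (max (k+1) j) * L" for k
  have e01: "0 \<le> e k \<and> e k \<le> ln 2" for k
  proof -
    have eq: "ww m k + y = MM m ^ (2*(k+1)) + MM m ^ (2*j)" by (simp only: ww_def y_def)
    show ?thesis
      using ln_sum_bound[where m=m and a="k+1" and b=j] unfolding e_def h_def L_def eq by linarith
  qed
  have e0: "0 \<le> e k" and e1: "e k \<le> ln 2" for k using e01[of k] by auto
  have hs: "(\<Sum>k<m. if odd k then h k else - h k)
      = 2 * L * (\<Sum>k<m. (-1)^(k+1) * real (max (k+1) j)) + (\<Sum>k<m. if odd k then e k else - e k)"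
  proof -
    have "(\<Sum>k<m. if odd k then h k else - h k)
        = (\<Sum>k<m. 2 * L * ((-1)^(k+1) * real (max (k+1) j)) + (if odd k then e k else - e k))"
      by (rule sum.cong) (auto simp: e_def)
    also have "\<dots> = (\<Sum>k<m. 2 * L * ((-1)^(k+1) * real (max (k+1) j))) + (\<Sum>k<m. if odd k then e k else - e k)"
      by (rule sum.distrib)
    also have "(\<Sum>k<m. 2 * L * ((-1)^(k+1) * real (max (k+1) j))) = 2 * L * (\<Sum>k<m. (-1)^(k+1) * real (max (k+1) j))"
      by (rule sum_distrib_left[symmetric])
    finally show ?thesis .
  qed
  have Ezr: "real_of_int (Ez j m) = 2 * real j + real_of_int (Kz m) + 4 * (\<Sum>k<m. (-1)^(k+1) * real (max (k+1) j))"
    by (simp add: Ez_def)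
  have D2: "ln T1 - ln T2 = L * real_of_int (Ez j m) + 2 * (\<Sum>k<m. if odd k then e k else - e k)"
    unfolding D hs Ezr by (simp add: algebra_simps)
  have Sb: "\<bar>\<Sum>k<m. if odd k then e k else - e k\<bar> \<le> real m * ln 2"
  proof -
    have "\<bar>\<Sum>k<m. if odd k then e k else - e k\<bar> \<le> (\<Sum>k<m. \<bar>if odd k then e k else - e k\<bar>)"
      by (rule sum_abs)
    also have "\<dots> \<le> (\<Sum>k<m. ln 2)"
      by (rule sum_mono) (use e0 e1 in auto)
    finally show ?thesis by simp
  qed
  have Lv: "L = 2 * (real m + 1) * ln 2" unfolding L_def by (rule ln_MM)
  have ln2: "ln (2::real) > 0" by simp
  have Ev: "real_of_int (Ez j m) = (if odd j then 1 else -1)" using Ez_val[OF jm] by simp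
  define S where "S = (\<Sum>k<m. if odd k then e k else - e k)"
  have S1: "- (real m * ln 2) \<le> S" "S \<le> real m * ln 2" using Sb unfolding S_def abs_le_iff by linarith+
  have Lv': "L = 2 * (real m * ln 2) + 2 * ln 2" using Lv by (simp add: algebra_simps)
  show ?thesis
  proof (cases "odd j")
    case True
    then have "ln T1 - ln T2 = L + 2 * S" using D2 Ev by (simp add: S_def)
    then have "ln T1 - ln T2 > 0" using S1 Lv' ln2 by linarith
    then have "T1 > T2" using T1pos T2pos by simp
    then show ?thesis using True pv by (simp add: y_def)
  next
    case False
    then have "ln T1 - ln T2 = - L + 2 * S" using D2 Ev by (simp add: S_def)
    then have "ln T1 - ln T2 < 0" using S1 Lv' ln2 by linarith
    then have "T1 < T2" using T1pos T2pos by simp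
    then show ?thesis using False pv by (simp add: y_def)
  qed
qed

lemma pvg_of_real: "pvg m (of_real y :: 'a::real_field) = of_real (pvg m y)"
  by (simp add: pvg_def lfg_def)

lemma pvg_cont: "continuous_on S (pvg m :: real \<Rightarrow> real)"
  unfolding pvg_def[abs_def] lfg_def by (intro continuous_intros)

lemma card_odd: "card {k. k < m \<and> odd k} = m div 2"
proof (induction m)
  case 0 then show ?case by simp
next
  case (Suc m)
  have "{k. k < Suc m \<and> odd k} = (if odd m then insert m {k. k < m \<and> odd k} else {k. k < m \<and> odd k})"
    by (auto simp: less_Suc_eq)
  then show ?case using Suc by (auto simp: odd_pos)
qed

lemma card_even: "card {k. k < m \<and> even k} = (m + 1) div 2"
proof (induction m)
  case 0 then show ?case by simp
next
  case (Suc m)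
  have "{k. k < Suc m \<and> even k} = (if even m then insert m {k. k < m \<and> even k} else {k. k < m \<and> even k})"
    by (auto simp: less_Suc_eq)
  then show ?case using Suc by auto
qed

definition qf :: "nat \<Rightarrow> nat \<Rightarrow> complex poly" where
  "qf m k = [:of_real (sc m k * ww m k), of_real (sc m k):]"

definition pc :: "nat \<Rightarrow> complex poly" where
  "pc m = [:0, 1:] * (\<Prod>k\<in>{k. k < m \<and> odd k}. (qf m k)^2) - (\<Prod>k\<in>{k. k < m \<and> even k}. (qf m k)^2)"

lemma poly_qf: "poly (qf m k) y = lfg m k y"
  by (simp add: qf_def lfg_def algebra_simps)

lemma poly_pc: "poly (pc m) y = pvg m y"
  by (simp add: pc_def pvg_def poly_prod poly_qf)

lemma degree_pc: "degree (pc m) \<le> m + 1"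
proof -
  have dq: "degree ((qf m k)^2) \<le> 2" for k
  proof -
    have "degree ((qf m k)^2) \<le> degree (qf m k) * 2" by (rule degree_power_le)
    moreover have "degree (qf m k) \<le> 1" by (simp add: qf_def)
    ultimately show ?thesis by simp
  qed
  have "degree (\<Prod>k\<in>{k. k < m \<and> odd k}. (qf m k)^2) \<le> (\<Sum>k\<in>{k. k < m \<and> odd k}. degree ((qf m k)^2))"
    using degree_prod_sum_le[of "{k. k < m \<and> odd k}" "\<lambda>k. (qf m k)^2"] by (simp add: o_def)
  also have "\<dots> \<le> (\<Sum>k\<in>{k. k < m \<and> odd k}. 2)" by (rule sum_mono) (rule dq)
  also have "\<dots> = 2 * (m div 2)" using card_odd by simp
  finally have d1: "degree (\<Prod>k\<in>{k. k < m \<and> odd k}. (qf m k)^2) \<le> 2 * (m div 2)" .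
  have "degree (\<Prod>k\<in>{k. k < m \<and> even k}. (qf m k)^2) \<le> (\<Sum>k\<in>{k. k < m \<and> even k}. degree ((qf m k)^2))"
    using degree_prod_sum_le[of "{k. k < m \<and> even k}" "\<lambda>k. (qf m k)^2"] by (simp add: o_def)
  also have "\<dots> \<le> (\<Sum>k\<in>{k. k < m \<and> even k}. 2)" by (rule sum_mono) (rule dq)
  also have "\<dots> = 2 * ((m + 1) div 2)" using card_even by simp
  finally have d2: "degree (\<Prod>k\<in>{k. k < m \<and> even k}. (qf m k)^2) \<le> 2 * ((m + 1) div 2)" .
  have "degree ([:0, 1:] * (\<Prod>k\<in>{k. k < m \<and> odd k}. (qf m k)^2)) \<le> degree [:0, 1::complex:] + degree (\<Prod>k\<in>{k. k < m \<and> odd k}. (qf m k)^2)"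
    by (rule degree_mult_le)
  also have "\<dots> \<le> 1 + 2 * (m div 2)" using d1 by simp
  also have "\<dots> \<le> m + 1" by simp
  finally have d1': "degree ([:0, 1:] * (\<Prod>k\<in>{k. k < m \<and> odd k}. (qf m k)^2)) \<le> m + 1" .
  have d2': "degree (\<Prod>k\<in>{k. k < m \<and> even k}. (qf m k)^2) \<le> m + 1" using d2 by simp
  show ?thesis unfolding pc_def using d1' d2' by (rule degree_diff_le)
qed

lemma pv_sign_ne:
  assumes "1 \<le> m" "j \<le> m + 1" shows "pvg m (MM m ^ (2*j)) \<noteq> (0::real)"
  using pv_sign[OF assms] by (auto split: if_splits)

lemma pc_ne0: assumes "1 \<le> m" shows "pc m \<noteq> 0"
proof
  assume "pc m = 0"
  then have "poly (pc m) (of_real (MM m ^ (2*0))) = 0" by simp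
  then have "of_real (pvg m (MM m ^ (2*0))) = (0::complex)" by (simp only: poly_pc pvg_of_real)
  then show False using pv_sign_ne[OF assms, of 0] by simp
qed

lemma root_in:
  assumes m1: "1 \<le> m" and jm: "j \<le> m"
  shows "\<exists>r. MM m ^ (2*j) < r \<and> r < MM m ^ (2*(j+1)) \<and> pvg m r = 0"
proof -
  let ?a = "MM m ^ (2*j)" and ?b = "MM m ^ (2*(j+1))"
  have ab: "?a < ?b" using MM_gt1 by (intro power_strict_increasing) auto
  have sa: "if odd j then pvg m ?a > 0 else pvg m ?a < 0" using pv_sign[OF m1] jm by simp
  have sb: "if odd (j+1) then pvg m ?b > 0 else pvg m ?b < 0" using pv_sign[OF m1, of "j+1"] jm by simp
  obtain x where x: "?a \<le> x" "x \<le> ?b" "pvg m x = 0"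
  proof (cases "odd j")
    case True
    then have "pvg m ?b \<le> 0" "0 \<le> pvg m ?a" using sa sb by auto
    then show ?thesis using IVT2'[of "pvg m" ?b 0 ?a, OF _ _ _ pvg_cont] ab that by auto
  next
    case False
    then have "pvg m ?a \<le> 0" "0 \<le> pvg m ?b" using sa sb by auto
    then show ?thesis using IVT'[of "pvg m" ?a 0 ?b, OF _ _ _ pvg_cont] ab that by auto
  qed
  have "x \<noteq> ?a" using x(3) sa by (auto split: if_splits)
  moreover have "x \<noteq> ?b" using x(3) sb by (auto split: if_splits)
  ultimately show ?thesis using x by (intro exI[of _ x]) auto
qed

lemma roots_main:
  assumes m1: "1 \<le> m"
  shows "\<exists>R::real set. finite R \<and> card R = m + 1 \<and> (\<forall>r\<in>R. r > 0) \<and>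
           {y::complex. pvg m y = 0} = of_real ` R"
proof -
  define rt where "rt j = (SOME r. MM m ^ (2*j) < r \<and> r < MM m ^ (2*(j+1)) \<and> pvg m r = 0)" for j
  have rt: "MM m ^ (2*j) < rt j \<and> rt j < MM m ^ (2*(j+1)) \<and> pvg m (rt j) = 0" if "j \<le> m" for j
    unfolding rt_def by (rule someI_ex) (rule root_in[OF m1 that])
  have mono: "rt i < rt j" if "i < j" "j \<le> m" for i j
  proof -
    have "rt i < MM m ^ (2*(i+1))" using rt[of i] that by auto
    also have "MM m ^ (2*(i+1)) \<le> MM m ^ (2*j)"
      using MM_gt1 that by (intro power_increasing) (auto simp: less_imp_le)
    also have "MM m ^ (2*j) < rt j" using rt[of j] that by auto
    finally show ?thesis .
  qed
  define R where "R = rt ` {..m}"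
  have inj: "inj_on rt {..m}"
  proof (rule inj_onI)
    fix i j assume i: "i \<in> {..m}" and j: "j \<in> {..m}" and e: "rt i = rt j"
    show "i = j"
    proof (rule ccontr)
      assume "i \<noteq> j"
      then have "i < j \<or> j < i" by auto
      then show False using mono e i j by (metis atMost_iff less_irrefl)
    qed
  qed
  have cR: "card R = m + 1" unfolding R_def using card_image[OF inj] by simp
  have finR: "finite R" unfolding R_def by simp
  have Rpos: "\<forall>r\<in>R. r > 0"
  proof
    fix r assume "r \<in> R"
    then obtain j where j: "j \<le> m" "r = rt j" by (auto simp: R_def)
    have "0 < MM m ^ (2*j)" using MM_pos by simp
    then show "r > 0" using rt[OF j(1)] j(2) by linarith
  qed
  have Rroot: "pvg m r = 0" if "r \<in> R" for r using that rt by (auto simp: R_def)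
  have sub: "of_real ` R \<subseteq> {y::complex. pvg m y = 0}"
    using Rroot by (auto simp: pvg_of_real)
  have eqp: "{y::complex. pvg m y = 0} = {y. poly (pc m) y = 0}" by (simp add: poly_pc)
  have finP: "finite {y::complex. pvg m y = 0}"
    unfolding eqp using pc_ne0[OF m1] by (rule poly_roots_finite)
  have "card {y::complex. pvg m y = 0} \<le> m + 1"
    unfolding eqp using card_poly_roots_bound[OF pc_ne0[OF m1]] degree_pc[of m] by linarith
  moreover have "card (of_real ` R :: complex set) = m + 1"
    using cR by (subst card_image) (auto simp: inj_on_def)
  ultimately have "of_real ` R = {y::complex. pvg m y = 0}"
    using card_seteq[OF finP sub] by simp
  then show ?thesis using finR cR Rpos by blast
qed

lemma prod_trunc: "(m::nat) \<le> N \<Longrightarrow> (\<Prod>k<N. if k < m then f k else 1) = (\<Prod>k<m. f k)"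
proof -
  assume "m \<le> N"
  then have "{..<N} \<inter> {k. k < m} = {..<m}" by auto
  then show ?thesis by (simp add: prod.If_cases)
qed

lemma split_prod:
  fixes m :: nat and a b :: "nat \<Rightarrow> 'a::comm_monoid_mult"
  shows "(\<Prod>k<m. if odd k then a k else b k) = prod a {k. k < m \<and> odd k} * prod b {k. k < m \<and> even k}"
proof -
  have "(\<Prod>k<m. if odd k then a k else b k) = prod a ({..<m} \<inter> {k. odd k}) * prod b ({..<m} \<inter> - {k. odd k})"
    by (rule prod.If_cases) simp
  moreover have "{..<m} \<inter> {k. odd k} = {k. k < m \<and> odd k}" by auto
  moreover have "{..<m} \<inter> - {k. odd k} = {k. k < m \<and> even k}" by auto
  ultimately show ?thesis by simp
qed

lemma char0_real_field: "of_nat (Suc n) \<noteq> (0::'a::real_field)"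
proof -
  have "of_real (of_nat (Suc n)) \<noteq> (0::'a)" by (simp only: of_real_eq_0_iff)
  then show ?thesis by simp
qed

lemma key_eq:
  fixes y :: "'a::real_field"
  assumes nz: "\<forall>k<m. lfg m k y \<noteq> 0"
  shows "(\<Prod>k<m. lfg m k y powi (2 * (-1)^k)) = y \<longleftrightarrow> pvg m y = 0"
proof -
  have "(\<Prod>k<m. lfg m k y powi (2 * (-1)^k)) = (\<Prod>k<m. if odd k then inverse ((lfg m k y)^2) else (lfg m k y)^2)"
  proof (rule prod.cong)
    fix k assume "k \<in> {..<m}"
    show "lfg m k y powi (2 * (-1)^k) = (if odd k then inverse ((lfg m k y)^2) else (lfg m k y)^2)"
    proof (cases "odd k")
      case True
      then have "(2::int) * (-1)^k = - 2" by simp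
      then show ?thesis using True by (simp add: power_int_minus)
    next
      case False
      then have "(2::int) * (-1)^k = 2" by simp
      then show ?thesis using False by simp
    qed
  qed simp
  also have "\<dots> = (\<Prod>k\<in>{k. k < m \<and> odd k}. inverse ((lfg m k y)^2)) * (\<Prod>k\<in>{k. k < m \<and> even k}. (lfg m k y)^2)"
    by (rule split_prod)
  also have "(\<Prod>k\<in>{k. k < m \<and> odd k}. inverse ((lfg m k y)^2)) = inverse (\<Prod>k\<in>{k. k < m \<and> odd k}. (lfg m k y)^2)"
    using prod_inversef[of "\<lambda>k. (lfg m k y)^2" "{k. k < m \<and> odd k}"] by (simp add: o_def)
  finally have e: "(\<Prod>k<m. lfg m k y powi (2 * (-1)^k)) =
     inverse (\<Prod>k\<in>{k. k < m \<and> odd k}. (lfg m k y)^2) * (\<Prod>k\<in>{k. k < m \<and> even k}. (lfg m k y)^2)" .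
  have O: "(\<Prod>k\<in>{k. k < m \<and> odd k}. (lfg m k y)^2) \<noteq> 0" using nz by (simp add: prod_zero_iff)
  show ?thesis unfolding e pvg_def using O by (auto simp: field_simps)
qed

context cfg begin

definition al :: "'n \<Rightarrow> real" where "al i = (if idx i < m then sc m (idx i) * ww m (idx i) else 1)"
definition be :: "'n \<Rightarrow> real" where "be i = (if idx i < m then sc m (idx i) else 0)"
definition Fs :: "'n \<Rightarrow> int^'n \<Rightarrow> real" where
  "Fs j a = (if a = 0 then - (al j + sum al UNIV) else if a = Pz then - (be j + sum be UNIV)
             else if a \<in> range (\<lambda>i. axis i 1) then (if a = axis j 1 then 2 else 1) else 0)"
definition mon :: "int^'n \<Rightarrow> 'a::real_field^'n \<Rightarrow> 'a" where
  "mon a x = (\<Prod>i\<in>UNIV. (x $ i) powi (a $ i))"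
definition vf :: "'a::real_field \<Rightarrow> 'a^'n" where
  "vf y = (\<chi> i. of_real (al i) + of_real (be i) * y)"

lemma al_pos: "al i > 0" by (simp add: al_def sc_pos ww_pos)
lemma be_nonneg: "be i \<ge> 0" by (simp add: be_def sc_pos less_imp_le)
lemma be_i0: "be i0 = s0 m" using idx_i0 m1 by (simp add: be_def sc_def)

lemma Pz_i0: "Pz $ i0 = 2" using idx_i0 m1 by (simp add: Pz_def cc_def)
lemma Pz_ne0: "Pz \<noteq> 0"
proof
  assume "Pz = 0" then have "Pz $ i0 = 0" by simp
  then show False using Pz_i0 by simp
qed
lemma Pz_ne_axis: "Pz \<noteq> axis i 1"
proof
  assume "Pz = axis i 1" then have "Pz $ i0 = axis i 1 $ i0" by simp
  then show False using Pz_i0 by (simp add: axis_def split: if_splits)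
qed
lemma axisz_ne0: "axis i (1::int) \<noteq> 0" by simp
lemma axis_ne_Pz: "axis i 1 \<noteq> Pz" using Pz_ne_axis[of i] by metis

lemma supp_Fs: "{a. Fs j a \<noteq> 0} = CCz"
proof -
  have s1: "sum al UNIV > 0" using al_pos by (intro sum_pos) auto
  have s2: "sum be UNIV \<ge> be i0" using be_nonneg by (intro member_le_sum) auto
  have "be i0 > 0" using be_i0 s0_pos by simp
  then have s2': "be j + sum be UNIV > 0" using s2 be_nonneg[of j] by linarith
  have "al j + sum al UNIV > 0" using s1 al_pos[of j] by linarith
  then show ?thesis using s2' Pz_ne0 Pz_ne_axis
    by (auto simp: Fs_def CCz_def)
qed

lemma mon_0: "mon 0 x = 1" by (simp add: mon_def)
lemma mon_axis: "mon (axis i 1) x = x $ i"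
proof -
  have "mon (axis i 1) x = (\<Prod>j\<in>UNIV. if j = i then x $ j else 1)"
    unfolding mon_def by (rule prod.cong) (auto simp: axis_def)
  then show ?thesis by simp
qed

lemma eval_Fs:
  fixes x :: "'a::real_field^'n"
  shows "laurent_eval (Fs j) x = (x $ j - of_real (al j) - of_real (be j) * mon Pz x)
           + (\<Sum>i\<in>UNIV. x $ i - of_real (al i) - of_real (be i) * mon Pz x)"
proof -
  have inj: "inj (\<lambda>i::'n. axis i (1::int))" by (auto simp: inj_def axis_eq_axis)
  have d1: "0 \<notin> insert Pz (range (\<lambda>i. axis i (1::int)))" using Pz_ne0 by auto
  have d2: "Pz \<notin> range (\<lambda>i. axis i (1::int))" using Pz_ne_axis by auto
  have "laurent_eval (Fs j) x = (\<Sum>a\<in>CCz. of_real (Fs j a) * mon a x)"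
    unfolding laurent_eval_def supp_Fs mon_def ..
  also have "\<dots> = of_real (Fs j 0) * mon 0 x + of_real (Fs j Pz) * mon Pz x
      + (\<Sum>i\<in>UNIV. of_real (Fs j (axis i 1)) * mon (axis i 1) x)"
    unfolding CCz_def using d1 d2 by (simp add: sum.reindex[OF inj] add.assoc)
  also have "\<dots> = - of_real (al j + sum al UNIV) - of_real (be j + sum be UNIV) * mon Pz x
      + (\<Sum>i\<in>UNIV. of_real (if i = j then 2 else 1) * x $ i)"
    using Pz_ne0 Pz_ne_axis axis_ne_Pz by (simp add: Fs_def mon_0 mon_axis axis_eq_axis algebra_simps)
  also have "(\<Sum>i\<in>UNIV. of_real (if i = j then 2 else 1) * x $ i) = x $ j + (\<Sum>i\<in>UNIV. x $ i)"
  proof -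
    have "(\<Sum>i\<in>UNIV. of_real (if i = j then 2 else 1) * x $ i) = (\<Sum>i\<in>UNIV. (if i = j then x $ i else 0) + x $ i)"
      by (rule sum.cong) auto
    then show ?thesis by (simp add: sum.distrib)
  qed
  finally show ?thesis
    by (simp add: sum_subtractf sum.distrib sum_distrib_left of_real_sum algebra_simps)
qed

lemma sys_iff:
  fixes x :: "'a::real_field^'n"
  shows "(\<forall>j. laurent_eval (Fs j) x = 0) \<longleftrightarrow> (\<forall>j. x $ j = of_real (al j) + of_real (be j) * mon Pz x)"
proof -
  define G where "G j = x $ j - of_real (al j) - of_real (be j) * mon Pz x" for j
  have ev: "laurent_eval (Fs j) x = G j + sum G UNIV" for j unfolding G_def eval_Fs ..
  have "(\<forall>j. G j + sum G UNIV = 0) \<longleftrightarrow> (\<forall>j. G j = 0)"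
  proof
    assume h: "\<forall>j. G j + sum G UNIV = 0"
    have "sum (\<lambda>j. G j + sum G UNIV) UNIV = 0" using h by simp
    then have "sum G UNIV + of_nat CARD('n) * sum G UNIV = 0" by (simp add: sum.distrib)
    then have "of_nat (Suc CARD('n)) * sum G UNIV = 0" by (simp add: algebra_simps)
    then have "sum G UNIV = 0" using char0_real_field[of "CARD('n)", where 'a='a] by (metis mult_eq_0_iff)
    then show "\<forall>j. G j = 0" using h by simp
  qed simp
  moreover have "(\<forall>j. G j = 0) \<longleftrightarrow> (\<forall>j. x $ j = of_real (al j) + of_real (be j) * mon Pz x)"
    by (simp add: G_def algebra_simps)
  ultimately show ?thesis by (simp add: ev)
qed

lemma mon_vf: "mon Pz (vf y :: 'a::real_field^'n) = (\<Prod>k<m. lfg m k y powi (2 * (-1)^k))"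
proof -
  have "mon Pz (vf y :: 'a^'n) = (\<Prod>i\<in>UNIV. (if idx i < m then lfg m (idx i) y powi (2 * (-1)^(idx i)) else 1))"
    unfolding mon_def by (rule prod.cong) (auto simp: vf_def Pz_def cc_def al_def be_def lfg_def algebra_simps)
  also have "\<dots> = (\<Prod>k<CARD('n). if k < m then lfg m k y powi (2 * (-1)^k) else 1)"
    using prod.reindex_bij_betw[OF bij, of "\<lambda>k. if k < m then lfg m k y powi (2 * (-1)^k) else 1"] by simp
  also have "\<dots> = (\<Prod>k<m. lfg m k y powi (2 * (-1)^k))" using mN by (rule prod_trunc)
  finally show ?thesis .
qed

lemma vf_comp: "vf y $ i = (if idx i < m then lfg m (idx i) y else 1)"
  by (simp add: vf_def al_def be_def lfg_def algebra_simps)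

lemma surj_idx: "k < m \<Longrightarrow> \<exists>i. idx i = k"
  using bij mN unfolding bij_betw_def by (metis UNIV_I imageE lessThan_iff order_less_le_trans)

lemma inj_vf: "inj (vf :: 'a::real_field \<Rightarrow> 'a^'n)"
proof (rule injI)
  fix y z :: 'a assume "vf y = vf z"
  then have "vf y $ i0 = vf z $ i0" by simp
  then have "of_real (be i0) * y = of_real (be i0) * z" by (simp add: vf_def)
  moreover have "be i0 \<noteq> 0" using be_i0 s0_pos[of m] by simp
  ultimately show "y = z" by simp
qed

end

context cfg begin

lemma torus_eq: "torus_solutions Fs = vf ` {y::complex. (\<forall>i. vf y $ i \<noteq> 0) \<and> mon Pz (vf y) = y}"
proof
  show "torus_solutions Fs \<subseteq> vf ` {y::complex. (\<forall>i. vf y $ i \<noteq> 0) \<and> mon Pz (vf y) = y}"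
  proof
    fix x assume "x \<in> torus_solutions Fs"
    then have nz: "\<forall>i. x $ i \<noteq> 0" and eq: "\<forall>j. laurent_eval (Fs j) x = 0"
      by (auto simp: torus_solutions_def)
    have eq2: "\<forall>j. x $ j = of_real (al j) + of_real (be j) * mon Pz x" using sys_iff[THEN iffD1, OF eq] .
    have "vf (mon Pz x) = (\<chi> j. x $ j)" unfolding vf_def using eq2 by (metis (no_types))
    then have xv: "x = vf (mon Pz x)" by simp
    have "(\<forall>i. vf (mon Pz x) $ i \<noteq> 0) \<and> mon Pz (vf (mon Pz x)) = mon Pz x"
      using nz xv[symmetric] by simp
    then show "x \<in> vf ` {y::complex. (\<forall>i. vf y $ i \<noteq> 0) \<and> mon Pz (vf y) = y}"
      using xv by blast
  qed
next
  show "vf ` {y::complex. (\<forall>i. vf y $ i \<noteq> 0) \<and> mon Pz (vf y) = y} \<subseteq> torus_solutions Fs"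
  proof
    fix x assume "x \<in> vf ` {y::complex. (\<forall>i. vf y $ i \<noteq> 0) \<and> mon Pz (vf y) = y}"
    then obtain y where y: "\<forall>i. vf y $ i \<noteq> 0" "mon Pz (vf y) = y" and x: "x = vf y" by blast
    have "\<forall>j. x $ j = of_real (al j) + of_real (be j) * mon Pz x" using y x by (simp add: vf_def)
    then have "\<forall>j. laurent_eval (Fs j) x = 0" by (rule sys_iff[THEN iffD2])
    then show "x \<in> torus_solutions Fs" using y x by (simp add: torus_solutions_def)
  qed
qed

lemma pos_eq: "positive_solutions Fs = vf ` {y::real. (\<forall>i. vf y $ i > 0) \<and> mon Pz (vf y) = y}"
proof
  show "positive_solutions Fs \<subseteq> vf ` {y::real. (\<forall>i. vf y $ i > 0) \<and> mon Pz (vf y) = y}"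
  proof
    fix x assume "x \<in> positive_solutions Fs"
    then have nz: "\<forall>i. x $ i > 0" and eq: "\<forall>j. laurent_eval (Fs j) x = 0"
      by (auto simp: positive_solutions_def)
    have eq2: "\<forall>j. x $ j = of_real (al j) + of_real (be j) * mon Pz x" using sys_iff[THEN iffD1, OF eq] .
    have "vf (mon Pz x) = (\<chi> j. x $ j)" unfolding vf_def using eq2 by (metis (no_types))
    then have xv: "x = vf (mon Pz x)" by simp
    have "(\<forall>i. vf (mon Pz x) $ i > 0) \<and> mon Pz (vf (mon Pz x)) = mon Pz x"
      using nz xv[symmetric] by simp
    then show "x \<in> vf ` {y::real. (\<forall>i. vf y $ i > 0) \<and> mon Pz (vf y) = y}"
      using xv by blast
  qed
next
  show "vf ` {y::real. (\<forall>i. vf y $ i > 0) \<and> mon Pz (vf y) = y} \<subseteq> positive_solutions Fs"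
  proof
    fix x assume "x \<in> vf ` {y::real. (\<forall>i. vf y $ i > 0) \<and> mon Pz (vf y) = y}"
    then obtain y where y: "\<forall>i. vf y $ i > 0" "mon Pz (vf y) = y" and x: "x = vf y" by blast
    have "\<forall>j. x $ j = of_real (al j) + of_real (be j) * mon Pz x" using y x by (simp add: vf_def)
    then have "\<forall>j. laurent_eval (Fs j) x = 0" by (rule sys_iff[THEN iffD2])
    then show "x \<in> positive_solutions Fs" using y x by (simp add: positive_solutions_def)
  qed
qed

lemma nz_iff: "(\<forall>i. vf y $ i \<noteq> (0::'a::real_field)) \<longleftrightarrow> (\<forall>k<m. lfg m k y \<noteq> 0)"
proof
  assume h: "\<forall>i. vf y $ i \<noteq> 0"
  show "\<forall>k<m. lfg m k y \<noteq> 0"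
  proof (intro allI impI)
    fix k assume "k < m"
    then obtain i where "idx i = k" using surj_idx by blast
    then show "lfg m k y \<noteq> 0" using h[rule_format, of i] \<open>k < m\<close> by (simp add: vf_comp)
  qed
next
  assume "\<forall>k<m. lfg m k y \<noteq> 0"
  then show "\<forall>i. vf y $ i \<noteq> 0" by (simp add: vf_comp)
qed

lemma main_count:
  "finite (torus_solutions Fs) \<and> card (torus_solutions Fs) = m + 1 \<and>
   finite (positive_solutions Fs) \<and> card (positive_solutions Fs) = m + 1"
proof -
  obtain R :: "real set" where finR: "finite R" and cR: "card R = m + 1" and Rpos: "\<forall>r\<in>R. r > 0"
    and roots: "{y::complex. pvg m y = 0} = of_real ` R"
    using roots_main[OF m1] by blast
  have Zc: "{y::complex. (\<forall>i. vf y $ i \<noteq> 0) \<and> mon Pz (vf y) = y} = of_real ` R"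
  proof
    show "{y::complex. (\<forall>i. vf y $ i \<noteq> 0) \<and> mon Pz (vf y) = y} \<subseteq> of_real ` R"
    proof
      fix y :: complex assume "y \<in> {y. (\<forall>i. vf y $ i \<noteq> 0) \<and> mon Pz (vf y) = y}"
      then have a: "\<forall>k<m. lfg m k y \<noteq> 0" and b: "mon Pz (vf y) = y" by (auto simp: nz_iff)
      have "pvg m y = 0" using key_eq[OF a] b by (simp add: mon_vf)
      then show "y \<in> of_real ` R" using roots by blast
    qed
  next
    show "of_real ` R \<subseteq> {y::complex. (\<forall>i. vf y $ i \<noteq> 0) \<and> mon Pz (vf y) = y}"
    proof
      fix y :: complex assume "y \<in> of_real ` R"
      then obtain r where r: "r \<in> R" "y = of_real r" by blast
      have "pvg m y = 0" using roots r by blast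
      moreover have a: "\<forall>k<m. lfg m k y \<noteq> 0"
      proof (intro allI impI)
        fix k assume "k < m"
        have "lfg m k r > 0" using Rpos r by (intro lfg_real_pos) auto
        moreover have "lfg m k y = of_real (lfg m k r)" using r by (simp add: lfg_def)
        ultimately show "lfg m k y \<noteq> 0" by simp
      qed
      ultimately have "mon Pz (vf y) = y" using key_eq[OF a] by (simp add: mon_vf)
      then show "y \<in> {y::complex. (\<forall>i. vf y $ i \<noteq> 0) \<and> mon Pz (vf y) = y}" using a by (simp add: nz_iff)
    qed
  qed
  have Zr: "{y::real. (\<forall>i. vf y $ i > 0) \<and> mon Pz (vf y) = y} = R"
  proof
    show "{y::real. (\<forall>i. vf y $ i > 0) \<and> mon Pz (vf y) = y} \<subseteq> R"
    proof
      fix y :: real assume "y \<in> {y. (\<forall>i. vf y $ i > 0) \<and> mon Pz (vf y) = y}"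
      then have p: "\<forall>i. vf y $ i > 0" and b: "mon Pz (vf y) = y" by auto
      have "\<forall>i. vf y $ i \<noteq> 0" using p by (metis less_irrefl)
      then have a: "\<forall>k<m. lfg m k y \<noteq> 0" by (simp only: nz_iff)
      have "pvg m y = 0" using key_eq[OF a] b by (simp add: mon_vf)
      then have "pvg m (of_real y :: complex) = 0" by (simp add: pvg_of_real)
      then have "(of_real y :: complex) \<in> of_real ` R" using roots by blast
      then show "y \<in> R" by (auto simp: image_iff)
    qed
  next
    show "R \<subseteq> {y::real. (\<forall>i. vf y $ i > 0) \<and> mon Pz (vf y) = y}"
    proof
      fix r assume r: "r \<in> R"
      have "(of_real r :: complex) \<in> {y. pvg m y = 0}" using roots r by blast
      then have "pvg m r = 0" by (simp add: pvg_of_real)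
      moreover have p: "\<forall>i. vf r $ i > 0"
        using Rpos r by (auto simp: vf_comp intro: lfg_real_pos)
      moreover have a: "\<forall>k<m. lfg m k r \<noteq> 0"
        using Rpos r lfg_real_pos by (metis less_irrefl)
      ultimately have "mon Pz (vf r) = r" using key_eq[OF a] by (simp add: mon_vf)
      then show "r \<in> {y::real. (\<forall>i. vf y $ i > 0) \<and> mon Pz (vf y) = y}" using p by simp
    qed
  qed
  have c1: "card (of_real ` R :: complex set) = m + 1"
    using cR by (subst card_image) (auto simp: inj_on_def)
  have t: "torus_solutions Fs = vf ` (of_real ` R)" unfolding torus_eq Zc ..
  have p: "positive_solutions Fs = vf ` R" unfolding pos_eq Zr ..
  have "card (torus_solutions Fs) = m + 1"
    unfolding t using c1 inj_vf by (subst card_image) (auto intro: inj_on_subset)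
  moreover have "card (positive_solutions Fs) = m + 1"
    unfolding p using cR inj_vf by (subst card_image) (auto intro: inj_on_subset)
  moreover have "finite (torus_solutions Fs)" unfolding t using finR by simp
  moreover have "finite (positive_solutions Fs)" unfolding p using finR by simp
  ultimately show ?thesis by blast
qed

end

theorem theorem3p6:
  fixes m :: nat
  assumes "1 \<le> m" and "m \<le> CARD('n::finite)"
  shows "\<exists>(C :: (int ^ 'n) set) (F :: 'n \<Rightarrow> int ^ 'n \<Rightarrow> real).
           is_circuit C \<and> circuit_m C = int m \<and>
           supported_on F C \<and> generic_system F C \<and>
           finite (positive_solutions F) \<and> card (positive_solutions F) = m + 1"
proof -
  obtain idx :: "'n \<Rightarrow> nat" where b: "bij_betw idx UNIV {0..<card (UNIV :: 'n set)}"
    using ex_bij_betw_finite_nat[of "UNIV :: 'n set"] by auto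
  then have b': "bij_betw idx UNIV {..<CARD('n)}" by (simp add: atLeast0LessThan)
  interpret cfg idx m using b' assms by unfold_locales
  have "supported_on Fs CCz" by (simp add: supported_on_def supp_Fs)
  moreover have "generic_system Fs CCz"
    using main_count nvol_CCz by (simp add: generic_system_def)
  ultimately show ?thesis
    using is_circuit_CCz m_CCz main_count by blast
qed

end
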